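(* Let $K$ be a field complete with respect to a discrete valuation with finite residue field, and let $\mathcal T$ be the Bruhat–Tits tree of $PSL(2,K)$. Let $\Gamma$ be a group, $\rho:\Gamma\to PSL(2,K)$ a representation (acting on $\mathcal T$), and $\Upsilon\subset\Gamma$ a normal subgroup such that $\rho(\Upsilon)$ has a nonempty set of fixed points in $\mathcal T$. Suppose $\rho(\Gamma)$ is Zariski-dense in $PSL(2,K)$ and not contained in any compact subgroup of $PSL(2,K)$. Then $\rho(\Upsilon)$ is trivial.
   Context: The Bruhat–Tits tree $\mathcal T$: vertices are lattices ($\mathcal O_K$-submodules $M\subset K^2$ of rank two spanning $K^2$) up to multiplication by $K^*$; two classes are joined by an edge of length $1$ if representatives satisfy $M_1\subset M_2$ with $M_2/M_1\cong\mathcal O_K/\mathfrak m$. $SL(2,K)$ acts by $M\mapsto gM$, the center acting trivially, giving an isometric action of $PSL(2,K)$. *)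

theory Defs
  imports "HOL-Analysis.Analysis" "HOL-Algebra.Coset"
begin

text \<open>A discrete valuation on a field 'k is given by v :: 'k => int on the nonzero
  elements (the value v 0 is irrelevant; conceptually v 0 = infinity).\<close>

definition discrete_valuation :: "('k::field \<Rightarrow> int) \<Rightarrow> bool" where
  "discrete_valuation v \<longleftrightarrow>
     (\<forall>x y. x \<noteq> 0 \<and> y \<noteq> 0 \<longrightarrow> v (x * y) = v x + v y) \<and>
     (\<forall>x y. x \<noteq> 0 \<and> y \<noteq> 0 \<and> x + y \<noteq> 0 \<longrightarrow> v (x + y) \<ge> min (v x) (v y)) \<and>
     (\<forall>n. \<exists>x. x \<noteq> 0 \<and> v x = n)"

definition val_ring :: "('k::field \<Rightarrow> int) \<Rightarrow> 'k set" where
  "val_ring v = {x. x = 0 \<or> v x \<ge> 0}"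

definition val_ideal :: "('k::field \<Rightarrow> int) \<Rightarrow> 'k set" where
  "val_ideal v = {x. x = 0 \<or> v x \<ge> 1}"

definition val_close :: "('k::field \<Rightarrow> int) \<Rightarrow> int \<Rightarrow> 'k \<Rightarrow> 'k \<Rightarrow> bool" where
  "val_close v n x y \<longleftrightarrow> x = y \<or> v (x - y) \<ge> n"

definition val_complete :: "('k::field \<Rightarrow> int) \<Rightarrow> bool" where
  "val_complete v \<longleftrightarrow>
     (\<forall>s :: nat \<Rightarrow> 'k.
        (\<forall>n. \<exists>N. \<forall>i\<ge>N. \<forall>j\<ge>N. val_close v n (s i) (s j)) \<longrightarrow>
        (\<exists>L. \<forall>n. \<exists>N. \<forall>i\<ge>N. val_close v n (s i) L))"

definition finite_residue_field :: "('k::field \<Rightarrow> int) \<Rightarrow> bool" where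
  "finite_residue_field v \<longleftrightarrow>
     finite (val_ring v // {(x, y). x \<in> val_ring v \<and> y \<in> val_ring v \<and> x - y \<in> val_ideal v})"

definition local_field_val :: "('k::field \<Rightarrow> int) \<Rightarrow> bool" where
  "local_field_val v \<longleftrightarrow> discrete_valuation v \<and> val_complete v \<and> finite_residue_field v"

definition val_topology :: "('k::field \<Rightarrow> int) \<Rightarrow> 'k topology" where
  "val_topology v = topology (\<lambda>U. \<forall>x\<in>U. \<exists>n. {y. val_close v n y x} \<subseteq> U)"

text \<open>(a,b,c,d) represents the matrix [[a,b],[c,d]].\<close>
type_synonym 'k mat2 = "'k \<times> 'k \<times> 'k \<times> 'k"

fun m2mult :: "'k::field mat2 \<Rightarrow> 'k mat2 \<Rightarrow> 'k mat2" where
  "m2mult (a, b, c, d) (a', b', c', d') =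
     (a * a' + b * c', a * b' + b * d', c * a' + d * c', c * b' + d * d')"

fun m2det :: "'k::field mat2 \<Rightarrow> 'k" where
  "m2det (a, b, c, d) = a * d - b * c"

fun m2neg :: "'k::field mat2 \<Rightarrow> 'k mat2" where
  "m2neg (a, b, c, d) = (- a, - b, - c, - d)"

definition m2id :: "'k::field mat2" where
  "m2id = (1, 0, 0, 1)"

fun m2app :: "'k::field mat2 \<Rightarrow> 'k \<times> 'k \<Rightarrow> 'k \<times> 'k" where
  "m2app (a, b, c, d) (x, y) = (a * x + b * y, c * x + d * y)"

definition SL2 :: "'k::field mat2 set" where
  "SL2 = {g. m2det g = 1}"

definition PSL2 :: "'k::field mat2 set monoid" where
  "PSL2 = \<lparr> carrier = {{g, m2neg g} | g. g \<in> SL2},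
            monoid.mult = (\<lambda>A B. {m2mult a b | a b. a \<in> A \<and> b \<in> B}),
            one = {m2id, m2neg m2id} \<rparr>"

definition SL2_topology :: "('k::field \<Rightarrow> int) \<Rightarrow> 'k mat2 topology" where
  "SL2_topology v = subtopology
     (prod_topology (val_topology v) (prod_topology (val_topology v)
        (prod_topology (val_topology v) (val_topology v)))) SL2"

definition PSL2_topology :: "('k::field \<Rightarrow> int) \<Rightarrow> 'k mat2 set topology" where
  "PSL2_topology v = topology (\<lambda>W. W \<subseteq> carrier PSL2 \<and> openin (SL2_topology v) (\<Union>W))"

text \<open>Zariski density in PSL(2,K): the preimage in SL(2,K) is Zariski dense, i.e. every
  polynomial in the four matrix entries vanishing on it vanishes on SL(2,K).
  A polynomial is a finitely supported coefficient function on exponent tuples.\<close>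
definition poly4_eval :: "(nat \<times> nat \<times> nat \<times> nat \<Rightarrow> 'k::field) \<Rightarrow> 'k mat2 \<Rightarrow> 'k" where
  "poly4_eval P g = (case g of (a, b, c, d) \<Rightarrow>
      (\<Sum>(i, j, k, l) \<in> {e. P e \<noteq> 0}. P (i, j, k, l) * a ^ i * b ^ j * c ^ k * d ^ l))"

definition zariski_dense_SL2 :: "'k::field mat2 set \<Rightarrow> bool" where
  "zariski_dense_SL2 S \<longleftrightarrow>
     (\<forall>P :: nat \<times> nat \<times> nat \<times> nat \<Rightarrow> 'k. finite {e. P e \<noteq> 0} \<longrightarrow>
        (\<forall>g\<in>S. poly4_eval P g = 0) \<longrightarrow> (\<forall>g\<in>SL2. poly4_eval P g = 0))"

definition zariski_dense_PSL2 :: "'k::field mat2 set set \<Rightarrow> bool" where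
  "zariski_dense_PSL2 H \<longleftrightarrow> zariski_dense_SL2 (\<Union>H)"

definition is_lattice :: "('k::field \<Rightarrow> int) \<Rightarrow> ('k \<times> 'k) set \<Rightarrow> bool" where
  "is_lattice v M \<longleftrightarrow>
     (\<exists>e1 e2. fst e1 * snd e2 - snd e1 * fst e2 \<noteq> 0 \<and>
        M = {(s * fst e1 + t * fst e2, s * snd e1 + t * snd e2) | s t.
               s \<in> val_ring v \<and> t \<in> val_ring v})"

definition scal2 :: "'k::field \<Rightarrow> 'k \<times> 'k \<Rightarrow> 'k \<times> 'k" where
  "scal2 c u = (c * fst u, c * snd u)"

definition lattice_equiv :: "('k::field \<Rightarrow> int) \<Rightarrow> (('k \<times> 'k) set \<times> ('k \<times> 'k) set) set" where
  "lattice_equiv v = {(M, N). is_lattice v M \<and> is_lattice v N \<and>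
                        (\<exists>c. c \<noteq> 0 \<and> N = scal2 c ` M)}"

definition BT_vertices :: "('k::field \<Rightarrow> int) \<Rightarrow> ('k \<times> 'k) set set set" where
  "BT_vertices v = {M. is_lattice v M} // lattice_equiv v"

text \<open>M \<subseteq> N with N/M isomorphic to O/m as O-modules (witnessed by an O-linear
  surjection N -> O/m with kernel M, O/m represented by O modulo m).\<close>
definition quot_is_residue :: "('k::field \<Rightarrow> int) \<Rightarrow> ('k \<times> 'k) set \<Rightarrow> ('k \<times> 'k) set \<Rightarrow> bool" where
  "quot_is_residue v M N \<longleftrightarrow> M \<subseteq> N \<and>
     (\<exists>\<phi>. (\<forall>u\<in>N. \<phi> u \<in> val_ring v) \<and>
          (\<forall>u\<in>N. \<forall>w\<in>N. \<phi> (fst u + fst w, snd u + snd w) - (\<phi> u + \<phi> w) \<in> val_ideal v) \<and>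
          (\<forall>a\<in>val_ring v. \<forall>u\<in>N. \<phi> (scal2 a u) - a * \<phi> u \<in> val_ideal v) \<and>
          (\<forall>r\<in>val_ring v. \<exists>u\<in>N. \<phi> u - r \<in> val_ideal v) \<and>
          (\<forall>u\<in>N. u \<in> M \<longleftrightarrow> \<phi> u \<in> val_ideal v))"

definition BT_edge :: "('k::field \<Rightarrow> int) \<Rightarrow> ('k \<times> 'k) set set \<Rightarrow> ('k \<times> 'k) set set \<Rightarrow> bool" where
  "BT_edge v X Y \<longleftrightarrow> X \<in> BT_vertices v \<and> Y \<in> BT_vertices v \<and>
     ((\<exists>M\<in>X. \<exists>N\<in>Y. quot_is_residue v M N) \<or> (\<exists>M\<in>Y. \<exists>N\<in>X. quot_is_residue v M N))"

text \<open>Points of the geometric realization of the tree, in barycentric coordinates: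
  either a vertex, or a point t X + (1-t) Y in the interior of an edge.\<close>
definition BT_points :: "('k::field \<Rightarrow> int) \<Rightarrow> (('k \<times> 'k) set set \<Rightarrow> real) set" where
  "BT_points v =
     {p. (\<exists>X\<in>BT_vertices v. p = (\<lambda>Z. if Z = X then 1 else 0)) \<or>
         (\<exists>X Y t. BT_edge v X Y \<and> X \<noteq> Y \<and> 0 < t \<and> t < 1 \<and>
                  p = (\<lambda>Z. if Z = X then t else if Z = Y then 1 - t else 0))}"

definition PSL2_act_vertex :: "'k::field mat2 set \<Rightarrow> ('k \<times> 'k) set set \<Rightarrow> ('k \<times> 'k) set set" where
  "PSL2_act_vertex A X = {m2app g ` M | g M. g \<in> A \<and> M \<in> X}"

definition BT_fixes :: "('k::field \<Rightarrow> int) \<Rightarrow> 'k mat2 set \<Rightarrow> (('k \<times> 'k) set set \<Rightarrow> real) \<Rightarrow> bool" where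
  "BT_fixes v A p \<longleftrightarrow> (\<forall>Z\<in>BT_vertices v. p (PSL2_act_vertex A Z) = p Z)"

definition BT_fixed_points :: "('k::field \<Rightarrow> int) \<Rightarrow> 'k mat2 set set \<Rightarrow> (('k \<times> 'k) set set \<Rightarrow> real) set" where
  "BT_fixed_points v H = {p \<in> BT_points v. \<forall>A\<in>H. BT_fixes v A p}"

end

theory Submission
  imports Defs
begin


locale dval =
  fixes v :: "'k::field \<Rightarrow> int"
  assumes dv: "discrete_valuation v"
begin

lemma vmult: "x \<noteq> 0 \<Longrightarrow> y \<noteq> 0 \<Longrightarrow> v (x * y) = v x + v y"
  using dv unfolding discrete_valuation_def by blast

lemma vadd: "x \<noteq> 0 \<Longrightarrow> y \<noteq> 0 \<Longrightarrow> x + y \<noteq> 0 \<Longrightarrow> min (v x) (v y) \<le> v (x + y)"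
  using dv unfolding discrete_valuation_def by blast

lemma vsurj: "\<exists>x. x \<noteq> 0 \<and> v x = n"
  using dv unfolding discrete_valuation_def by blast

lemma v1: "v 1 = 0"
  using vmult[of 1 1] by simp

lemma vneg1: "v (-1) = 0"
  using vmult[of "-1" "-1"] v1 by simp

lemma vneg: "x \<noteq> 0 \<Longrightarrow> v (- x) = v x"
  using vmult[of "-1" x] vneg1 by simp

lemma vinv: "x \<noteq> 0 \<Longrightarrow> v (inverse x) = - v x"
  using vmult[of x "inverse x"] v1 by simp

lemma vpow: "x \<noteq> 0 \<Longrightarrow> v (x ^ n) = int n * v x"
  by (induction n) (auto simp: v1 vmult algebra_simps)

definition unif :: 'k where "unif = (SOME x. x \<noteq> 0 \<and> v x = 1)"

lemma unif: "unif \<noteq> 0" "v unif = 1"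
  using someI_ex[OF vsurj[of 1]] unfolding unif_def by auto

definition vge :: "int \<Rightarrow> 'k \<Rightarrow> bool" where
  "vge n x \<longleftrightarrow> x = 0 \<or> n \<le> v x"

lemma vge_0[simp]: "vge n 0" by (simp add: vge_def)
lemma vge_1: "vge 0 1" by (simp add: vge_def v1)
lemma vge_neg[simp]: "vge n (- x) = vge n x"
  by (cases "x = 0") (auto simp: vge_def vneg)
lemma vge_add: "vge n x \<Longrightarrow> vge n y \<Longrightarrow> vge n (x + y)"
  unfolding vge_def using vadd[of x y] by fastforce
lemma vge_diff: "vge n x \<Longrightarrow> vge n y \<Longrightarrow> vge n (x - y)"
  using vge_add[of n x "-y"] by simp
lemma vge_mult: "vge n x \<Longrightarrow> vge m y \<Longrightarrow> vge (n + m) (x * y)"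
  unfolding vge_def by (cases "x = 0 \<or> y = 0") (auto simp: vmult)
lemma vge_mono: "m \<le> n \<Longrightarrow> vge n x \<Longrightarrow> vge m x"
  unfolding vge_def by auto
lemma vge_ex: "\<exists>n. vge n x"
  unfolding vge_def by auto
lemma vge_ex_le: "\<exists>n. n \<le> m \<and> vge n x"
  unfolding vge_def by (cases "x = 0") (auto intro: exI[of _ "min m (v x)"])
lemma not_vge: "x \<noteq> 0 \<Longrightarrow> \<not> vge (v x + 1) x"
  unfolding vge_def by auto
lemma vge_inv: "x \<noteq> 0 \<Longrightarrow> vge (- v x) (inverse x)"
  unfolding vge_def by (simp add: vinv)
lemma vge_self: "vge (v x) x"
  unfolding vge_def by auto
lemma vge_sq: "0 \<le> k \<Longrightarrow> vge (-k) (x * x) \<Longrightarrow> vge (-k) x"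
  unfolding vge_def by (cases "x = 0") (auto simp: vmult)
lemma vge_unif_pow: "vge (int n) (unif ^ n)"
  unfolding vge_def using unif by (simp add: vpow)
lemma vge_strict:
  assumes "vge n (y - x)" "x \<noteq> 0" "v x < n"
  shows "y \<noteq> 0 \<and> v y = v x"
proof -
  have yne: "y \<noteq> 0"
  proof
    assume "y = 0"
    then have "vge n x" using assms(1) by (metis diff_0 vge_neg)
    then show False using assms(2,3) unfolding vge_def by auto
  qed
  have A: "min (v x) (v (y - x)) \<le> v y" if "y - x \<noteq> 0"
    using vadd[of x "y - x"] that assms(2) yne by simp
  have B: "min (v y) (v (x - y)) \<le> v x" if "y - x \<noteq> 0"
    using vadd[of y "x - y"] that assms(2) yne by simp
  have C: "v (x - y) = v (y - x)" if "y - x \<noteq> 0"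
    using vneg[of "y - x"] that by simp
  show ?thesis
  proof (cases "y - x = 0")
    case True then show ?thesis using yne by simp
  next
    case False
    then have "n \<le> v (y - x)" using assms(1) unfolding vge_def by auto
    then show ?thesis using A[OF False] B[OF False] C[OF False] assms(3) yne by linarith
  qed
qed

end


fun mono4 :: "nat \<times> nat \<times> nat \<times> nat \<Rightarrow> 'k::field mat2 \<Rightarrow> 'k" where
  "mono4 (i,j,k,l) (a,b,c,d) = a^i * b^j * c^k * d^l"

fun eadd :: "nat \<times> nat \<times> nat \<times> nat \<Rightarrow> nat \<times> nat \<times> nat \<times> nat \<Rightarrow> nat \<times> nat \<times> nat \<times> nat" where
  "eadd (i,j,k,l) (i',j',k',l') = (i+i', j+j', k+k', l+l')"

lemma mono4_eadd: "mono4 (eadd e1 e2) g = mono4 e1 g * mono4 e2 g"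
  by (cases e1; cases e2; cases g) (simp add: power_add algebra_simps)

lemma poly4_eval_S:
  assumes "finite S" "\<And>e. e \<notin> S \<Longrightarrow> P e = 0"
  shows "poly4_eval P g = (\<Sum>e\<in>S. P e * mono4 e g)"
proof -
  obtain a b c d where g: "g = (a,b,c,d)" by (cases g) auto
  have sub: "{e. P e \<noteq> 0} \<subseteq> S" using assms(2) by blast
  have "poly4_eval P g = (\<Sum>e\<in>{e. P e \<noteq> 0}. P e * mono4 e g)"
    unfolding poly4_eval_def g by (auto intro!: sum.cong)
  also have "\<dots> = (\<Sum>e\<in>S. P e * mono4 e g)"
    by (rule sum.mono_neutral_left[OF assms(1) sub]) auto
  finally show ?thesis .
qed

definition ispoly :: "('k::field mat2 \<Rightarrow> 'k) \<Rightarrow> bool" where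
  "ispoly f \<longleftrightarrow> (\<exists>P S. finite S \<and> (\<forall>e. e \<notin> S \<longrightarrow> P e = 0) \<and> (\<forall>g. f g = (\<Sum>e\<in>S. P e * mono4 e g)))"

lemma ispoly_zariski:
  assumes "ispoly f" "zariski_dense_SL2 G" "\<forall>g\<in>G. f g = 0" "g \<in> SL2"
  shows "f g = 0"
proof -
  obtain P S where PS: "finite S" "\<forall>e. e \<notin> S \<longrightarrow> P e = 0" "\<forall>g. f g = (\<Sum>e\<in>S. P e * mono4 e g)"
    using assms(1) unfolding ispoly_def by blast
  have fin: "finite {e. P e \<noteq> 0}" using PS(1,2) by (metis (mono_tags) finite_subset mem_Collect_eq subsetI)
  have ev: "poly4_eval P h = f h" for h
  proof -
    have "poly4_eval P h = (\<Sum>e\<in>S. P e * mono4 e h)" by (rule poly4_eval_S) (use PS in auto)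
    then show ?thesis by (simp add: PS(3)[rule_format, of h])
  qed
  show ?thesis using assms(2,3,4) fin ev unfolding zariski_dense_SL2_def by metis
qed

lemma ispoly_const: "ispoly (\<lambda>g. c)"
  unfolding ispoly_def
  by (rule exI[of _ "\<lambda>e. if e = (0,0,0,0) then c else 0"], rule exI[of _ "{(0,0,0,0)}"]) auto

lemma ispoly_e1: "ispoly (\<lambda>g. fst g)"
  unfolding ispoly_def
  by (rule exI[of _ "\<lambda>e. if e = (1,0,0,0) then 1 else 0"], rule exI[of _ "{(1,0,0,0)}"]) auto
lemma ispoly_e2: "ispoly (\<lambda>g. fst (snd g))"
  unfolding ispoly_def
  by (rule exI[of _ "\<lambda>e. if e = (0,1,0,0) then 1 else 0"], rule exI[of _ "{(0,1,0,0)}"]) auto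
lemma ispoly_e3: "ispoly (\<lambda>g. fst (snd (snd g)))"
  unfolding ispoly_def
  by (rule exI[of _ "\<lambda>e. if e = (0,0,1,0) then 1 else 0"], rule exI[of _ "{(0,0,1,0)}"]) auto
lemma ispoly_e4: "ispoly (\<lambda>g. snd (snd (snd g)))"
  unfolding ispoly_def
  by (rule exI[of _ "\<lambda>e. if e = (0,0,0,1) then 1 else 0"], rule exI[of _ "{(0,0,0,1)}"]) auto

lemma ispoly_add:
  assumes "ispoly f" "ispoly h"
  shows "ispoly (\<lambda>g. f g + h g)"
proof -
  obtain P S where PS: "finite S" "\<forall>e. e \<notin> S \<longrightarrow> P e = 0" "\<forall>g. f g = (\<Sum>e\<in>S. P e * mono4 e g)"
    using assms(1) unfolding ispoly_def by blast
  obtain Q T where QT: "finite T" "\<forall>e. e \<notin> T \<longrightarrow> Q e = 0" "\<forall>g. h g = (\<Sum>e\<in>T. Q e * mono4 e g)"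
    using assms(2) unfolding ispoly_def by blast
  have f: "f g = (\<Sum>e\<in>S \<union> T. P e * mono4 e g)" for g
    unfolding PS(3)[rule_format] by (rule sum.mono_neutral_left) (use PS QT in auto)
  have h: "h g = (\<Sum>e\<in>S \<union> T. Q e * mono4 e g)" for g
    unfolding QT(3)[rule_format] by (rule sum.mono_neutral_left) (use PS QT in auto)
  show ?thesis unfolding ispoly_def
    apply (rule exI[of _ "\<lambda>e. P e + Q e"], rule exI[of _ "S \<union> T"])
    using PS QT f h by (auto simp: sum.distrib algebra_simps)
qed

lemma ispoly_mult:
  assumes "ispoly f" "ispoly h"
  shows "ispoly (\<lambda>g. f g * h g)"
proof -
  obtain P S where PS: "finite S" "\<forall>e. e \<notin> S \<longrightarrow> P e = 0" "\<forall>g. f g = (\<Sum>e\<in>S. P e * mono4 e g)"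
    using assms(1) unfolding ispoly_def by blast
  obtain Q T where QT: "finite T" "\<forall>e. e \<notin> T \<longrightarrow> Q e = 0" "\<forall>g. h g = (\<Sum>e\<in>T. Q e * mono4 e g)"
    using assms(2) unfolding ispoly_def by blast
  define ad where "ad = (\<lambda>p. eadd (fst p) (snd p))"
  define U where "U = ad ` (S \<times> T)"
  define R where "R = (\<lambda>e. \<Sum>p\<in>{p. p \<in> S \<times> T \<and> ad p = e}. P (fst p) * Q (snd p))"
  have finST: "finite (S \<times> T)" using PS QT by auto
  have finU: "finite U" unfolding U_def using finST by auto
  have R0: "e \<notin> U \<Longrightarrow> R e = 0" for e unfolding R_def U_def by (auto intro!: sum.neutral)
  have "f g * h g = (\<Sum>e\<in>U. R e * mono4 e g)" for g
  proof -
    have "(\<Sum>e\<in>U. R e * mono4 e g) = (\<Sum>e\<in>U. \<Sum>p\<in>{p. p \<in> S \<times> T \<and> ad p = e}. P (fst p) * Q (snd p) * mono4 (ad p) g)"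
      unfolding R_def by (auto simp: sum_distrib_right intro!: sum.cong)
    also have "\<dots> = (\<Sum>p\<in>S \<times> T. P (fst p) * Q (snd p) * mono4 (ad p) g)"
      by (rule sum.group[OF finST finU]) (auto simp: U_def)
    also have "\<dots> = (\<Sum>p\<in>S \<times> T. (P (fst p) * mono4 (fst p) g) * (Q (snd p) * mono4 (snd p) g))"
      by (auto simp: ad_def mono4_eadd algebra_simps intro!: sum.cong)
    also have "\<dots> = f g * h g"
      unfolding PS(3)[rule_format] QT(3)[rule_format] sum_product sum.cartesian_product by (simp add: case_prod_beta)
    finally show ?thesis by simp
  qed
  then show ?thesis unfolding ispoly_def using finU R0 by blast
qed

lemma ispoly_cmult: "ispoly f \<Longrightarrow> ispoly (\<lambda>g. c * f g)"
  using ispoly_mult[OF ispoly_const] by blast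

lemma ispoly_neg: "ispoly f \<Longrightarrow> ispoly (\<lambda>g. - f g)"
  using ispoly_cmult[of f "-1"] by simp

lemma ispoly_diff: "ispoly f \<Longrightarrow> ispoly h \<Longrightarrow> ispoly (\<lambda>g. f g - h g)"
  using ispoly_add[OF _ ispoly_neg] by (simp add: algebra_simps)

lemmas ispoly_intros = ispoly_const ispoly_e1 ispoly_e2 ispoly_e3 ispoly_e4 ispoly_add ispoly_mult ispoly_diff ispoly_neg


fun det4 :: "'k::field mat2 \<Rightarrow> 'k mat2 \<Rightarrow> 'k mat2 \<Rightarrow> 'k mat2 \<Rightarrow> 'k" where
  "det4 (a1,b1,c1,d1) (a2,b2,c2,d2) (a3,b3,c3,d3) (a4,b4,c4,d4) =
    a1 * (b2 * (c3*d4 - c4*d3) - b3 * (c2*d4 - c4*d2) + b4 * (c2*d3 - c3*d2))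
  - a2 * (b1 * (c3*d4 - c4*d3) - b3 * (c1*d4 - c4*d1) + b4 * (c1*d3 - c3*d1))
  + a3 * (b1 * (c2*d4 - c4*d2) - b2 * (c1*d4 - c4*d1) + b4 * (c1*d2 - c2*d1))
  - a4 * (b1 * (c2*d3 - c3*d2) - b2 * (c1*d3 - c3*d1) + b3 * (c1*d2 - c2*d1))"

fun msc :: "'k::field \<Rightarrow> 'k mat2 \<Rightarrow> 'k mat2" where
  "msc c (a,b,d,e) = (c*a, c*b, c*d, c*e)"

fun madd :: "'k::field mat2 \<Rightarrow> 'k mat2 \<Rightarrow> 'k mat2" where
  "madd (a,b,c,d) (a',b',c',d') = (a+a', b+b', c+c', d+d')"

lemma cramer:
  fixes w1 w2 w3 w4 x :: "'k::field mat2"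
  shows "msc (det4 w1 w2 w3 w4) x = madd (madd (msc (det4 x w2 w3 w4) w1) (msc (det4 w1 x w3 w4) w2))
                                       (madd (msc (det4 w1 w2 x w4) w3) (msc (det4 w1 w2 w3 x) w4))"
  apply (cases w1; cases w2; cases w3; cases w4; cases x)
  apply (simp only: det4.simps msc.simps madd.simps prod.inject)
  apply (intro conjI)
  by (simp add: algebra_simps)+

fun adj2 :: "'k::field mat2 \<Rightarrow> 'k mat2" where
  "adj2 (a,b,c,d) = (d, -b, -c, a)"

definition Yc :: "'k::field mat2 \<Rightarrow> 'k mat2 \<Rightarrow> 'k mat2" where
  "Yc n b = m2mult (m2mult (adj2 b) n) b"

definition Dpol :: "'k::field mat2 \<Rightarrow> 'k mat2 \<Rightarrow> 'k" where
  "Dpol n b = det4 m2id n (Yc n b) (m2mult n (Yc n b))"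

definition ispolyM :: "('k::field mat2 \<Rightarrow> 'k mat2) \<Rightarrow> bool" where
  "ispolyM f \<longleftrightarrow> ispoly (\<lambda>b. fst (f b)) \<and> ispoly (\<lambda>b. fst (snd (f b))) \<and>
     ispoly (\<lambda>b. fst (snd (snd (f b)))) \<and> ispoly (\<lambda>b. snd (snd (snd (f b))))"

lemma ispolyM_id: "ispolyM (\<lambda>b. b)"
  unfolding ispolyM_def by (simp add: ispoly_intros)

lemma ispolyM_const: "ispolyM (\<lambda>b. c)"
  unfolding ispolyM_def by (simp add: ispoly_intros)

lemma m2mult_alt: "m2mult x y =
  (fst x * fst y + fst (snd x) * fst (snd (snd y)),
   fst x * fst (snd y) + fst (snd x) * snd (snd (snd y)),
   fst (snd (snd x)) * fst y + snd (snd (snd x)) * fst (snd (snd y)),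
   fst (snd (snd x)) * fst (snd y) + snd (snd (snd x)) * snd (snd (snd y)))"
  by (cases x; cases y) simp

lemma adj2_alt: "adj2 x = (snd (snd (snd x)), - fst (snd x), - fst (snd (snd x)), fst x)"
  by (cases x) simp

lemma det4_alt: "det4 x1 x2 x3 x4 = (let a1 = fst x1; b1 = fst (snd x1); c1 = fst (snd (snd x1)); d1 = snd (snd (snd x1));
  a2 = fst x2; b2 = fst (snd x2); c2 = fst (snd (snd x2)); d2 = snd (snd (snd x2));
  a3 = fst x3; b3 = fst (snd x3); c3 = fst (snd (snd x3)); d3 = snd (snd (snd x3));
  a4 = fst x4; b4 = fst (snd x4); c4 = fst (snd (snd x4)); d4 = snd (snd (snd x4)) in
    a1 * (b2 * (c3*d4 - c4*d3) - b3 * (c2*d4 - c4*d2) + b4 * (c2*d3 - c3*d2))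
  - a2 * (b1 * (c3*d4 - c4*d3) - b3 * (c1*d4 - c4*d1) + b4 * (c1*d3 - c3*d1))
  + a3 * (b1 * (c2*d4 - c4*d2) - b2 * (c1*d4 - c4*d1) + b4 * (c1*d2 - c2*d1))
  - a4 * (b1 * (c2*d3 - c3*d2) - b2 * (c1*d3 - c3*d1) + b3 * (c1*d2 - c2*d1)))"
  by (cases x1; cases x2; cases x3; cases x4) simp

lemma ispolyM_mult: "ispolyM f \<Longrightarrow> ispolyM g \<Longrightarrow> ispolyM (\<lambda>b. m2mult (f b) (g b))"
  unfolding ispolyM_def m2mult_alt by (simp add: ispoly_intros)

lemma ispolyM_adj: "ispolyM f \<Longrightarrow> ispolyM (\<lambda>b. adj2 (f b))"
  unfolding ispolyM_def adj2_alt by (simp add: ispoly_intros)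

lemma ispoly_det4: "ispolyM f1 \<Longrightarrow> ispolyM f2 \<Longrightarrow> ispolyM f3 \<Longrightarrow> ispolyM f4 \<Longrightarrow>
   ispoly (\<lambda>b. det4 (f1 b) (f2 b) (f3 b) (f4 b))"
  unfolding ispolyM_def det4_alt Let_def by (simp add: ispoly_intros)

lemma ispoly_Dpol: "ispoly (Dpol n)"
proof -
  have "ispoly (\<lambda>b. det4 m2id n (Yc n b) (m2mult n (Yc n b)))"
    unfolding Yc_def
    by (intro ispoly_det4 ispolyM_const ispolyM_mult ispolyM_adj ispolyM_id)
  then show ?thesis unfolding Dpol_def[abs_def] .
qed

lemma Dpol_upper:
  assumes "al * de - be * ga = 1"
  shows "Dpol (al, be, ga, de) (1, t, 0, 1) = ga^2 * t^2 * ((al + de)^2 - 4 - ga^2 * t^2)"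
  using assms unfolding Dpol_def Yc_def m2id_def by simp algebra

lemma Dpol_lower:
  assumes "al * de - be * ga = 1"
  shows "Dpol (al, be, ga, de) (1, 0, t, 1) = be^2 * t^2 * ((al + de)^2 - 4 - be^2 * t^2)"
  using assms unfolding Dpol_def Yc_def m2id_def by simp algebra

lemma Dpol_diag:
  shows "Dpol (al, 0, 0, de) (1 + p, 1, p, 1) = - ((al - de) ^ 4 * (1 + p) * p)"
  unfolding Dpol_def Yc_def m2id_def by simp algebra


context dval begin

fun entb :: "int \<Rightarrow> 'k mat2 \<Rightarrow> bool" where
  "entb k (a,b,c,d) \<longleftrightarrow> vge (-k) a \<and> vge (-k) b \<and> vge (-k) c \<and> vge (-k) d"

lemma entb_mono: "k \<le> k' \<Longrightarrow> entb k x \<Longrightarrow> entb k' x"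
  by (cases x) (auto intro: vge_mono[of "-k'" "-k"])

lemma entb_add: "entb k x \<Longrightarrow> entb k y \<Longrightarrow> entb k (madd x y)"
  by (cases x; cases y) (auto intro: vge_add)

lemma entb_sc: "vge (-kc) c \<Longrightarrow> entb k x \<Longrightarrow> entb (kc + k) (msc c x)"
  by (cases x) (auto dest: vge_mult[of "-kc" c "-k"])

lemma entb_mult: "entb k x \<Longrightarrow> entb k' y \<Longrightarrow> entb (k + k') (m2mult x y)"
proof -
  assume a: "entb k x" "entb k' y"
  obtain a1 b1 c1 d1 where x: "x = (a1,b1,c1,d1)" by (cases x) auto
  obtain a2 b2 c2 d2 where y: "y = (a2,b2,c2,d2)" by (cases y) auto
  have m: "vge (-k - k') (p * q)" if "vge (-k) p" "vge (-k') q" for p q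
  proof -
    have "-k + -k' = -k - k'" by simp
    then show ?thesis using vge_mult[OF that] by metis
  qed
  show ?thesis using a unfolding x y by (auto intro!: vge_add m)
qed

lemma entb_ex: "\<exists>k. entb k x"
proof -
  obtain a b c d where x: "x = (a,b,c,d)" by (cases x) auto
  obtain na nb nc nd where "vge na a" "vge nb b" "vge nc c" "vge nd d" using vge_ex by metis
  then have "entb (- min (min na nb) (min nc nd)) x" unfolding x
    by (simp; meson vge_mono min.cobounded1 min.cobounded2 order.trans)
  then show ?thesis by blast
qed

lemma det_adj: "m2det g = 1 \<Longrightarrow> m2mult (adj2 g) g = m2id"
  by (cases g) (auto simp: m2id_def algebra_simps)
lemma det_adj': "m2det g = 1 \<Longrightarrow> m2mult g (adj2 g) = m2id"
  by (cases g) (auto simp: m2id_def algebra_simps)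

lemma m2mult_assoc: "m2mult (m2mult x y) z = m2mult x (m2mult y z)"
  by (cases x; cases y; cases z) (simp add: algebra_simps)

lemma m2mult_id[simp]: "m2mult m2id x = x" "m2mult x m2id = x"
  by (cases x; simp add: m2id_def)+

lemma Yc_mult: "m2det g = 1 \<Longrightarrow> Yc (m2mult x y) g = m2mult (Yc x g) (Yc y g)"
proof -
  assume d: "m2det g = 1"
  have "m2mult (Yc x g) (Yc y g) = m2mult (m2mult (adj2 g) x) (m2mult (m2mult g (adj2 g)) (m2mult y g))"
    unfolding Yc_def by (simp add: m2mult_assoc)
  also have "\<dots> = Yc (m2mult x y) g" unfolding det_adj'[OF d] Yc_def by (simp add: m2mult_assoc)
  finally show ?thesis by simp
qed

lemma Yc_add: "Yc (madd x y) g = madd (Yc x g) (Yc y g)"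
  unfolding Yc_def by (cases x; cases y; cases g) (simp add: algebra_simps)

lemma Yc_sc: "Yc (msc c x) g = msc c (Yc x g)"
  unfolding Yc_def by (cases x; cases g) (simp add: algebra_simps)

lemma Yc_id: "m2det g = 1 \<Longrightarrow> Yc m2id g = m2id"
  unfolding Yc_def using det_adj by simp

lemma Yc_Yc: "m2det g = 1 \<Longrightarrow> m2det h = 1 \<Longrightarrow> Yc (Yc x h) g = Yc x (m2mult h g)"
proof -
  assume "m2det g = 1" "m2det h = 1"
  have "adj2 (m2mult h g) = m2mult (adj2 g) (adj2 h)"
    by (cases g; cases h) (simp add: algebra_simps)
  then show ?thesis unfolding Yc_def by (simp add: m2mult_assoc)
qed

lemma entb_id: "entb 0 m2id"
  by (simp add: m2id_def vge_1)

lemma Yc_E21: "Yc (0,0,1,0) (p,q,r,s) = (- (q*p), - (q*q), p*p, p*q)"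
  unfolding Yc_def by simp
lemma Yc_E12: "Yc (0,1,0,0) (p,q,r,t) = (t * r, t * t, - (r * r), - (r * t))"
  unfolding Yc_def by simp

lemma witness:
  fixes n :: "'k mat2"
  assumes "m2det n = 1" "n \<noteq> m2id" "n \<noteq> m2neg m2id"
  shows "\<exists>b. m2det b = 1 \<and> Dpol n b \<noteq> 0"
proof -
  obtain al be ga de where n: "n = (al, be, ga, de)" by (cases n) auto
  have det: "al * de - be * ga = 1" using assms(1) n by simp
  define p where "p = unif"
  have p0: "p \<noteq> 0" using unif p_def by simp
  have p2: "p * p \<noteq> 1"
  proof
    assume "p * p = 1"
    then have "v (p * p) = 0" using v1 by simp
    then show False using vmult[OF p0 p0] unif p_def by simp
  qed
  have p1: "1 + p \<noteq> 0"
  proof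
    assume "1 + p = 0"
    then have "p = -1" by (simp add: add_eq_0_iff)
    then show False using vneg1 unif p_def by simp
  qed
  show ?thesis
  proof (cases "ga \<noteq> 0")
    case True
    show ?thesis
    proof (rule ccontr)
      assume "\<not> ?thesis"
      then have z: "Dpol n (1, t, 0, 1) = 0" for t by (auto)
      have z1: "ga^2 * 1^2 * ((al + de)^2 - 4 - ga^2 * 1^2) = 0" using z[of 1] Dpol_upper[OF det, of 1] n by simp
      have z2: "ga^2 * p^2 * ((al + de)^2 - 4 - ga^2 * p^2) = 0" using z[of p] Dpol_upper[OF det, of p] n by simp
      from z1 True have e: "(al + de)^2 - 4 = ga^2" by simp
      from z2 have "ga^2 * p^2 * (ga^2 * (1 - p^2)) = 0" unfolding e by (simp add: algebra_simps)
      then have "1 - p^2 = 0" using True p0 by simp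
      then show False using p2 by (simp add: power2_eq_square)
    qed
  next
    case False
    then have ga: "ga = 0" by simp
    show ?thesis
    proof (cases "be \<noteq> 0")
      case True
      show ?thesis
      proof (rule ccontr)
        assume "\<not> ?thesis"
        then have z: "Dpol n (1, 0, t, 1) = 0" for t by (auto)
        have z1: "be^2 * 1^2 * ((al + de)^2 - 4 - be^2 * 1^2) = 0" using z[of 1] Dpol_lower[OF det, of 1] n by simp
        have z2: "be^2 * p^2 * ((al + de)^2 - 4 - be^2 * p^2) = 0" using z[of p] Dpol_lower[OF det, of p] n by simp
        from z1 True have e: "(al + de)^2 - 4 = be^2" by simp
        from z2 have "be^2 * p^2 * (be^2 * (1 - p^2)) = 0" unfolding e by (simp add: algebra_simps)
        then have "1 - p^2 = 0" using True p0 by simp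
        then show False using p2 by (simp add: power2_eq_square)
      qed
    next
      case False
      then have be: "be = 0" by simp
      have "al \<noteq> de"
      proof
        assume e: "al = de"
        then have "al * al = 1" using det ga be by simp
        then have "(al - 1) * (al + 1) = 0" by (simp add: algebra_simps)
        then have "al - 1 = 0 \<or> al + 1 = 0" by simp
        then have "al = 1 \<or> al = -1" by (auto simp: eq_neg_iff_add_eq_0)
        then show False using assms(2,3) n e ga be by (auto simp: m2id_def)
      qed
      then have "Dpol n (1 + p, 1, p, 1) \<noteq> 0"
        using Dpol_diag[of al de p] n ga be p0 p1 by simp
      moreover have "m2det (1 + p, 1, p, 1) = 1" by simp
      ultimately show ?thesis by blast
    qed
  qed
qed

end


context dval begin

lemma msc_inv: "c \<noteq> 0 \<Longrightarrow> msc (inverse c) (msc c x) = x"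
  by (cases x) simp

lemma core_bound:
  assumes GS: "G \<subseteq> SL2" and zd: "zariski_dense_SL2 G"
    and nN: "n \<in> N" and nS: "m2det n = 1" "n \<noteq> m2id" "n \<noteq> m2neg m2id"
    and conj: "\<forall>g\<in>G. \<forall>x\<in>N. Yc x g \<in> N"
    and bnd: "\<forall>x\<in>N. entb j x"
  shows "\<exists>k. \<forall>g\<in>G. entb k g"
proof -
  have detG: "m2det g = 1" if "g \<in> G" for g using GS that unfolding SL2_def by auto
  define Bd where "Bd X \<longleftrightarrow> (\<exists>k. \<forall>g\<in>G. entb k (Yc X g))" for X
  have Bd_add: "Bd (madd X Y)" if hX: "Bd X" and hY: "Bd Y" for X Y
  proof -
    obtain k1 where k1: "\<forall>g\<in>G. entb k1 (Yc X g)" using hX unfolding Bd_def by blast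
    obtain k2 where k2: "\<forall>g\<in>G. entb k2 (Yc Y g)" using hY unfolding Bd_def by blast
    have "\<forall>g\<in>G. entb (max k1 k2) (Yc (madd X Y) g)"
      unfolding Yc_add using k1 k2 by (meson entb_add entb_mono max.cobounded1 max.cobounded2)
    then show ?thesis unfolding Bd_def by blast
  qed
  have Bd_sc: "Bd (msc c X)" if hX: "Bd X" for X c
  proof -
    obtain k1 where k1: "\<forall>g\<in>G. entb k1 (Yc X g)" using hX unfolding Bd_def by blast
    obtain kc where kc: "vge kc c" using vge_ex by blast
    have "vge (- (-kc)) c" using kc by simp
    then have "\<forall>g\<in>G. entb (-kc + k1) (Yc (msc c X) g)"
      unfolding Yc_sc using k1 entb_sc by blast
    then show ?thesis unfolding Bd_def by blast
  qed
  have Bd_mult: "Bd (m2mult X Y)" if hX: "Bd X" and hY: "Bd Y" for X Y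
  proof -
    obtain k1 where k1: "\<forall>g\<in>G. entb k1 (Yc X g)" using hX unfolding Bd_def by blast
    obtain k2 where k2: "\<forall>g\<in>G. entb k2 (Yc Y g)" using hY unfolding Bd_def by blast
    have "\<forall>g\<in>G. entb (k1 + k2) (Yc (m2mult X Y) g)"
      using k1 k2 Yc_mult detG entb_mult by metis
    then show ?thesis unfolding Bd_def by blast
  qed
  have Bd_id: "Bd m2id"
    unfolding Bd_def using Yc_id detG entb_id by metis
  have Bd_N: "Bd x" if "x \<in> N" for x
    unfolding Bd_def using bnd conj that by blast
  obtain b where bG: "b \<in> G" and Db: "Dpol n b \<noteq> 0"
  proof -
    have "\<exists>b\<in>G. Dpol n b \<noteq> 0"
    proof (rule ccontr)
      assume "\<not> ?thesis"
      then have "\<forall>g\<in>G. Dpol n g = 0" by blast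
      then have "\<forall>g\<in>SL2. Dpol n g = 0" using ispoly_zariski[OF ispoly_Dpol zd] by blast
      moreover obtain b0 where "m2det b0 = 1" "Dpol n b0 \<noteq> 0" using witness[OF nS] by blast
      ultimately show False unfolding SL2_def by (metis mem_Collect_eq)
    qed
    then show ?thesis using that by blast
  qed
  define D where "D = Dpol n b"
  have w: "Bd m2id" "Bd n" "Bd (Yc n b)" "Bd (m2mult n (Yc n b))"
    using Bd_id Bd_N[OF nN] Bd_N conj bG nN Bd_mult by auto
  have BdE: "Bd E" for E
  proof -
    have "Bd (msc D E)"
      unfolding D_def Dpol_def
      by (subst cramer) (intro Bd_add Bd_sc w)
    then have "Bd (msc (inverse D) (msc D E))" by (rule Bd_sc)
    then show ?thesis using msc_inv Db D_def by metis
  qed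
  obtain k1 where k1: "\<forall>g\<in>G. entb k1 (Yc (0,0,1,0) g)" using BdE[of "(0,0,1,0)"] unfolding Bd_def by blast
  obtain k2 where k2: "\<forall>g\<in>G. entb k2 (Yc (0,1,0,0) g)" using BdE[of "(0,1,0,0)"] unfolding Bd_def by blast
  define K where "K = max 0 (max k1 k2)"
  have "entb K g" if "g \<in> G" for g
  proof -
    obtain p q r t where g: "g = (p,q,r,t)" by (cases g) auto
    have e1: "entb k1 (Yc (0,0,1,0) (p,q,r,t))" using k1 that g by blast
    have e2: "entb k2 (Yc (0,1,0,0) (p,q,r,t))" using k2 that g by blast
    have a: "vge (-k1) (p*p)" "vge (-k1) (q*q)" using e1 unfolding Yc_E21 by simp_all
    have b: "vge (-k2) (r*r)" "vge (-k2) (t*t)" using e2 unfolding Yc_E12 by simp_all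
    have "vge (-K) (p*p)" "vge (-K) (q*q)" "vge (-K) (r*r)" "vge (-K) (t*t)"
      using a b unfolding K_def by (auto intro: vge_mono[rotated])
    then show ?thesis unfolding g K_def by (auto intro!: vge_sq)
  qed
  then show ?thesis by blast
qed

end


definition cls :: "'k::field mat2 \<Rightarrow> 'k mat2 set" where
  "cls g = {g, m2neg g}"

lemma neg_neg[simp]: "m2neg (m2neg g) = g" by (cases g) simp
lemma mult_neg1: "m2mult (m2neg a) b = m2neg (m2mult a b)" by (cases a; cases b) (simp add: algebra_simps)
lemma mult_neg2: "m2mult a (m2neg b) = m2neg (m2mult a b)" by (cases a; cases b) (simp add: algebra_simps)
lemma det_neg[simp]: "m2det (m2neg g) = m2det g" by (cases g) (simp add: algebra_simps)
lemma det_mult: "m2det (m2mult a b) = m2det a * m2det b" by (cases a; cases b) (simp add: algebra_simps)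
lemma det_adj2[simp]: "m2det (adj2 g) = m2det g" by (cases g) (simp add: algebra_simps)
lemma adj2_neg: "adj2 (m2neg g) = m2neg (adj2 g)" by (cases g) simp

lemma mm_assoc: "m2mult (m2mult x y) z = m2mult x (m2mult y z)"
  by (cases x; cases y; cases z) (simp add: algebra_simps)
lemma mm_id: "m2mult m2id x = x" "m2mult x m2id = x"
  by (cases x; simp add: m2id_def)+

lemma cls_neg[simp]: "cls (m2neg g) = cls g" unfolding cls_def by auto
lemma mem_cls: "x \<in> cls a \<Longrightarrow> cls x = cls a" unfolding cls_def by auto
lemma self_cls: "a \<in> cls a" unfolding cls_def by auto

lemma SL2_iff: "g \<in> SL2 \<longleftrightarrow> m2det g = 1" unfolding SL2_def by simp

lemma PSL2_carrier: "carrier PSL2 = cls ` SL2"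
proof -
  have "carrier PSL2 = {{g, m2neg g} | g. g \<in> SL2}" unfolding PSL2_def by (simp only: partial_object.select_convs)
  then show ?thesis unfolding cls_def by blast
qed

lemma PSL2_one: "\<one>\<^bsub>PSL2\<^esub> = cls m2id"
  unfolding PSL2_def cls_def by simp

lemma PSL2_mult: "cls a \<otimes>\<^bsub>PSL2\<^esub> cls b = cls (m2mult a b)"
proof -
  have "cls a \<otimes>\<^bsub>PSL2\<^esub> cls b = {m2mult x y | x y. x \<in> cls a \<and> y \<in> cls b}"
    unfolding PSL2_def by (simp only: monoid.select_convs)
  also have "\<dots> = cls (m2mult a b)"
  proof -
    have e: "m2mult (m2neg a) (m2neg b) = m2mult a b" by (simp add: mult_neg1 mult_neg2)
    show ?thesis unfolding cls_def
    proof (intro Set.set_eqI iffI)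
      fix z assume "z \<in> {m2mult x y |x y. x \<in> {a, m2neg a} \<and> y \<in> {b, m2neg b}}"
      then obtain x y where z: "z = m2mult x y" "x = a \<or> x = m2neg a" "y = b \<or> y = m2neg b" by blast
      then show "z \<in> {m2mult a b, m2neg (m2mult a b)}" using e mult_neg1[of a b] mult_neg2[of a b] by auto
    next
      fix z assume "z \<in> {m2mult a b, m2neg (m2mult a b)}"
      then have "z = m2mult a b \<or> z = m2mult (m2neg a) b" using mult_neg1[of a b] by auto
      then show "z \<in> {m2mult x y |x y. x \<in> {a, m2neg a} \<and> y \<in> {b, m2neg b}}" by blast
    qed
  qed
  finally show ?thesis .
qed

lemma PSL2_mult_closed: "a \<in> SL2 \<Longrightarrow> b \<in> SL2 \<Longrightarrow> m2mult a b \<in> SL2"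
  by (simp add: SL2_iff det_mult)

lemma dadj: "a \<in> SL2 \<Longrightarrow> m2mult (adj2 a) a = m2id"
  by (cases a) (auto simp: SL2_iff m2id_def algebra_simps)

lemma group_PSL2: "group (PSL2 :: 'k::field mat2 set monoid)"
proof (rule groupI)
  fix x y :: "'k mat2 set"
  assume "x \<in> carrier PSL2" "y \<in> carrier PSL2"
  then obtain a b where ab: "a \<in> SL2" "b \<in> SL2" "x = cls a" "y = cls b" unfolding PSL2_carrier by blast
  have "m2mult a b \<in> SL2" using PSL2_mult_closed ab(1,2) .
  then show "x \<otimes>\<^bsub>PSL2\<^esub> y \<in> carrier PSL2" unfolding PSL2_carrier ab(3,4) PSL2_mult by (rule imageI)
next
  have "m2id \<in> (SL2 :: 'k mat2 set)" unfolding SL2_iff m2id_def by simp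
  then show "\<one>\<^bsub>PSL2\<^esub> \<in> carrier (PSL2 :: 'k mat2 set monoid)"
    unfolding PSL2_carrier PSL2_one by (rule imageI)
next
  fix x y z :: "'k mat2 set"
  assume "x \<in> carrier PSL2" "y \<in> carrier PSL2" "z \<in> carrier PSL2"
  then obtain a b c where "x = cls a" "y = cls b" "z = cls c" unfolding PSL2_carrier by blast
  then show "x \<otimes>\<^bsub>PSL2\<^esub> y \<otimes>\<^bsub>PSL2\<^esub> z = x \<otimes>\<^bsub>PSL2\<^esub> (y \<otimes>\<^bsub>PSL2\<^esub> z)"
    by (simp only: PSL2_mult mm_assoc)
next
  fix x :: "'k mat2 set"
  assume "x \<in> carrier PSL2"
  then obtain a where "x = cls a" unfolding PSL2_carrier by blast
  then show "\<one>\<^bsub>PSL2\<^esub> \<otimes>\<^bsub>PSL2\<^esub> x = x" by (simp only: PSL2_one PSL2_mult mm_id)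
next
  fix x :: "'k mat2 set"
  assume "x \<in> carrier PSL2"
  then obtain a where a: "a \<in> SL2" "x = cls a" unfolding PSL2_carrier by blast
  have "adj2 a \<in> SL2" using a(1) unfolding SL2_iff by simp
  then have "cls (adj2 a) \<in> carrier PSL2" unfolding PSL2_carrier by (rule imageI)
  moreover have "cls (adj2 a) \<otimes>\<^bsub>PSL2\<^esub> x = \<one>\<^bsub>PSL2\<^esub>"
    unfolding a(2) PSL2_mult PSL2_one dadj[OF a(1)] ..
  ultimately show "\<exists>y\<in>carrier PSL2. y \<otimes>\<^bsub>PSL2\<^esub> x = \<one>\<^bsub>PSL2\<^esub>" by blast
qed

lemma PSL2_inv: "a \<in> SL2 \<Longrightarrow> inv\<^bsub>PSL2\<^esub> (cls a) = cls (adj2 a)"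
proof -
  assume a: "a \<in> SL2"
  have c1: "cls a \<in> carrier PSL2" unfolding PSL2_carrier using a by (rule imageI)
  have "adj2 a \<in> SL2" using a unfolding SL2_iff by simp
  then have c2: "cls (adj2 a) \<in> carrier PSL2" unfolding PSL2_carrier by (rule imageI)
  have "cls (adj2 a) \<otimes>\<^bsub>PSL2\<^esub> cls a = \<one>\<^bsub>PSL2\<^esub>"
    unfolding PSL2_mult PSL2_one dadj[OF a] ..
  then show ?thesis using group.inv_equality[OF group_PSL2 _ c1 c2] by blast
qed

lemma cls_SL2: "x \<in> carrier PSL2 \<Longrightarrow> \<exists>a\<in>SL2. x = cls a"
  unfolding PSL2_carrier by auto

lemma carrier_sub_SL2: "x \<in> carrier PSL2 \<Longrightarrow> x \<subseteq> SL2"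
  unfolding PSL2_carrier cls_def by (auto simp: SL2_iff)

locale rhoctx =
  fixes \<Gamma> :: "('g, 'b) monoid_scheme" and \<rho> :: "'g \<Rightarrow> 'k::field mat2 set" and \<Upsilon> :: "'g set"
  assumes grp: "group \<Gamma>" and hom: "\<rho> \<in> hom \<Gamma> PSL2" and nrm: "normal \<Upsilon> \<Gamma>"
begin

definition GG where "GG = \<Union>(\<rho> ` carrier \<Gamma>)"
definition NN where "NN = \<Union>(\<rho> ` \<Upsilon>)"

lemma gh: "group_hom \<Gamma> PSL2 \<rho>"
  unfolding group_hom_def group_hom_axioms_def using grp group_PSL2 hom by blast

lemma rho_carrier: "x \<in> carrier \<Gamma> \<Longrightarrow> \<rho> x \<in> carrier PSL2"
  using hom unfolding hom_def by auto

lemma Ups_sub: "\<Upsilon> \<subseteq> carrier \<Gamma>"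
  using nrm unfolding normal_def subgroup_def by auto

lemma GG_SL2: "GG \<subseteq> SL2"
  unfolding GG_def using rho_carrier carrier_sub_SL2 by blast

lemma NN_GG: "NN \<subseteq> GG"
  unfolding NN_def GG_def using Ups_sub by blast

lemma mem_GG: "g \<in> GG \<Longrightarrow> \<exists>x\<in>carrier \<Gamma>. \<rho> x = cls g"
proof -
  assume "g \<in> GG"
  then obtain x where x: "x \<in> carrier \<Gamma>" "g \<in> \<rho> x" unfolding GG_def by auto
  obtain a where "\<rho> x = cls a" using cls_SL2 rho_carrier x(1) by blast
  then show ?thesis using x mem_cls by metis
qed

lemma cls_sub: "cls g = X \<Longrightarrow> g \<in> X" using self_cls[of g] by simp

lemma GG_id: "m2id \<in> GG"
proof -
  have "\<rho> \<one>\<^bsub>\<Gamma>\<^esub> = cls m2id" using group_hom.hom_one[OF gh] PSL2_one by simp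
  then show ?thesis unfolding GG_def using monoid.one_closed[OF group.is_monoid[OF grp]] self_cls by fastforce
qed

lemma GG_mult: "g \<in> GG \<Longrightarrow> h \<in> GG \<Longrightarrow> m2mult g h \<in> GG"
proof -
  assume "g \<in> GG" "h \<in> GG"
  then obtain x y where "x \<in> carrier \<Gamma>" "y \<in> carrier \<Gamma>" "\<rho> x = cls g" "\<rho> y = cls h" using mem_GG by metis
  then have "\<rho> (x \<otimes>\<^bsub>\<Gamma>\<^esub> y) = cls (m2mult g h)" "x \<otimes>\<^bsub>\<Gamma>\<^esub> y \<in> carrier \<Gamma>"
    using group_hom.hom_mult[OF gh] PSL2_mult monoid.m_closed[OF group.is_monoid[OF grp]] by simp_all
  then show ?thesis unfolding GG_def using self_cls by fastforce
qed

lemma GG_adj: "g \<in> GG \<Longrightarrow> adj2 g \<in> GG"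
proof -
  assume g: "g \<in> GG"
  then obtain x where x: "x \<in> carrier \<Gamma>" "\<rho> x = cls g" using mem_GG by metis
  have "g \<in> SL2" using g GG_SL2 by auto
  then have "\<rho> (inv\<^bsub>\<Gamma>\<^esub> x) = cls (adj2 g)" using group_hom.hom_inv[OF gh x(1)] x PSL2_inv by simp
  moreover have "inv\<^bsub>\<Gamma>\<^esub> x \<in> carrier \<Gamma>" using x group.inv_closed[OF grp] by blast
  ultimately show ?thesis unfolding GG_def using self_cls by fastforce
qed

lemma mem_NN: "n \<in> NN \<Longrightarrow> \<exists>u\<in>\<Upsilon>. \<rho> u = cls n"
proof -
  assume "n \<in> NN"
  then obtain u where u: "u \<in> \<Upsilon>" "n \<in> \<rho> u" unfolding NN_def by auto
  obtain a where "\<rho> u = cls a" using cls_SL2 rho_carrier u(1) Ups_sub by blast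
  then show ?thesis using u mem_cls by metis
qed

lemma NN_conj: "g \<in> GG \<Longrightarrow> n \<in> NN \<Longrightarrow> Yc n g \<in> NN"
proof -
  assume g: "g \<in> GG" and n: "n \<in> NN"
  obtain x where x: "x \<in> carrier \<Gamma>" "\<rho> x = cls g" using mem_GG g by metis
  obtain u where u: "u \<in> \<Upsilon>" "\<rho> u = cls n" using mem_NN n by metis
  have gS: "g \<in> SL2" using g GG_SL2 by auto
  have uc: "u \<in> carrier \<Gamma>" using u Ups_sub by auto
  have ix: "inv\<^bsub>\<Gamma>\<^esub> x \<in> carrier \<Gamma>" using x group.inv_closed[OF grp] by blast
  have mem: "inv\<^bsub>\<Gamma>\<^esub> x \<otimes>\<^bsub>\<Gamma>\<^esub> u \<otimes>\<^bsub>\<Gamma>\<^esub> x \<in> \<Upsilon>"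
    using normal.inv_op_closed1[OF nrm x(1) u(1)] .
  have "\<rho> (inv\<^bsub>\<Gamma>\<^esub> x \<otimes>\<^bsub>\<Gamma>\<^esub> u \<otimes>\<^bsub>\<Gamma>\<^esub> x) = \<rho> (inv\<^bsub>\<Gamma>\<^esub> x) \<otimes>\<^bsub>PSL2\<^esub> \<rho> u \<otimes>\<^bsub>PSL2\<^esub> \<rho> x"
  proof -
    have c: "inv\<^bsub>\<Gamma>\<^esub> x \<otimes>\<^bsub>\<Gamma>\<^esub> u \<in> carrier \<Gamma>"
      using monoid.m_closed[OF group.is_monoid[OF grp] ix uc] .
    show ?thesis
      using group_hom.hom_mult[OF gh c x(1)] group_hom.hom_mult[OF gh ix uc] by simp
  qed
  also have "\<dots> = cls (adj2 g) \<otimes>\<^bsub>PSL2\<^esub> cls n \<otimes>\<^bsub>PSL2\<^esub> cls g"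
    using group_hom.hom_inv[OF gh x(1)] x u PSL2_inv[OF gS] by simp
  also have "\<dots> = cls (Yc n g)"
    unfolding Yc_def by (simp only: PSL2_mult)
  finally show ?thesis unfolding NN_def using mem self_cls by fastforce
qed

end


lemma app_adj: "m2det h = 1 \<Longrightarrow> m2app (adj2 h) (m2app h u) = u"
proof -
  assume dh: "m2det h = 1"
  obtain a b c d where h: "h = (a,b,c,d)" by (cases h) auto
  have det: "a * d = 1 + b * c" using dh h by (simp add: algebra_simps)
  have k: "a * (d * z) = z + b * (c * z)" for z
  proof -
    have "a * (d * z) = (a * d) * z" by (simp add: mult.assoc)
    also have "\<dots> = (1 + b * c) * z" using det by simp
    also have "\<dots> = z + b * (c * z)" by (simp add: algebra_simps)
    finally show ?thesis .
  qed
  show ?thesis unfolding h by (cases u) (simp add: algebra_simps k det)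
qed

lemma scal2_1: "scal2 1 u = u" by (simp add: scal2_def)

context dval begin

lemma val_ring_vge: "x \<in> val_ring v \<longleftrightarrow> vge 0 x"
  unfolding val_ring_def vge_def by simp

definition latb :: "int \<Rightarrow> ('k \<times> 'k) set \<Rightarrow> bool" where
  "latb j M \<longleftrightarrow> (\<forall>u\<in>M. vge (-j) (fst u) \<and> vge (-j) (snd u)) \<and> (\<forall>x y. vge j x \<and> vge j y \<longrightarrow> (x,y) \<in> M)"

lemma latb_mono: "latb j M \<Longrightarrow> j \<le> j' \<Longrightarrow> latb j' M"
  unfolding latb_def by (meson neg_le_iff_le vge_mono)

lemma lat_bounds:
  assumes "is_lattice v M"
  shows "\<exists>j\<ge>0. latb j M"
proof -
  obtain e1 e2 where e: "fst e1 * snd e2 - snd e1 * fst e2 \<noteq> 0"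
    "M = {(s * fst e1 + t * fst e2, s * snd e1 + t * snd e2) | s t. s \<in> val_ring v \<and> t \<in> val_ring v}"
    using assms unfolding is_lattice_def by blast
  define a where "a = fst e1" define c where "c = snd e1"
  define b where "b = fst e2" define d where "d = snd e2"
  define \<delta> where "\<delta> = a * d - c * b"
  have \<delta>0: "\<delta> \<noteq> 0" using e(1) unfolding \<delta>_def a_def b_def c_def d_def by (simp add: mult.commute)
  obtain j0 where j0: "entb j0 (a,b,c,d)" using entb_ex by blast
  define j1 where "j1 = max j0 0"
  have j1: "entb j1 (a,b,c,d)" using entb_mono[OF _ j0] j1_def by simp
  define j where "j = j1 + \<bar>v \<delta>\<bar>"
  have M: "M = {(s * a + t * b, s * c + t * d) | s t. vge 0 s \<and> vge 0 t}"
    using e(2) unfolding a_def b_def c_def d_def val_ring_vge by simp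
  have up: "vge (-j) (fst u) \<and> vge (-j) (snd u)" if uM: "u \<in> M" for u
  proof -
    obtain s t where st: "u = (s * a + t * b, s * c + t * d)" "vge 0 s" "vge 0 t" using uM M by blast
    have m: "vge (-j1) (s * z)" "vge (-j1) (t * z)" if "vge (-j1) z" for z
      using vge_mult[OF st(2) that] vge_mult[OF st(3) that] by simp_all
    have "vge (-j1) (fst u) \<and> vge (-j1) (snd u)" using j1 st(1) m by (auto intro!: vge_add)
    then show ?thesis using vge_mono[of "-j" "-j1"] j_def by auto
  qed
  have low: "(x, y) \<in> M" if "vge j x" "vge j y" for x y
  proof -
    define s where "s = (x * d - y * b) * inverse \<delta>"
    define t where "t = (y * a - x * c) * inverse \<delta>"
    have i: "vge (- v \<delta>) (inverse \<delta>)" using vge_inv[OF \<delta>0] .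
    have xd: "vge (j - j1) (x * d)" "vge (j - j1) (y * b)" "vge (j - j1) (y * a)" "vge (j - j1) (x * c)"
      using vge_mult[OF that(1), of "-j1" d] vge_mult[OF that(2), of "-j1" b]
        vge_mult[OF that(2), of "-j1" a] vge_mult[OF that(1), of "-j1" c] j1 by simp_all
    have "vge (j - j1 + - v \<delta>) s" "vge (j - j1 + - v \<delta>) t"
      unfolding s_def t_def using vge_mult[OF vge_diff[OF xd(1,2)] i] vge_mult[OF vge_diff[OF xd(3,4)] i] by simp_all
    moreover have "0 \<le> j - j1 + - v \<delta>" unfolding j_def by simp
    ultimately have st: "vge 0 s" "vge 0 t" using vge_mono by blast+
    have "s * a + t * b = x * \<delta> * inverse \<delta>" "s * c + t * d = y * \<delta> * inverse \<delta>"
      unfolding s_def t_def \<delta>_def by (simp_all add: algebra_simps)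
    then have "s * a + t * b = x" "s * c + t * d = y" using \<delta>0 by simp_all
    then show ?thesis unfolding M using st by force
  qed
  have "0 \<le> j" unfolding j_def j1_def by simp
  then show ?thesis using up low unfolding latb_def by blast
qed

lemma vge_comb: "vge (w - 2*j) e \<Longrightarrow> vge (- w - 2*j) e \<Longrightarrow> vge (- (2*j)) e"
  unfolding vge_def by auto

lemma bound_h:
  assumes M: "latb j M" and L: "latb j L" and j: "0 \<le> j"
    and h: "m2det h = 1" and c: "c \<noteq> 0" and eq: "m2app h ` M = scal2 c ` L"
  shows "entb (2*j) h"
proof -
  obtain a b c' d where hd: "h = (a, b, c', d)" by (cases h) auto
  define P where "P = unif ^ nat j"
  have P0: "P \<noteq> 0" unfolding P_def using unif by simp
  have vP: "v P = j" unfolding P_def using unif j by (simp add: vpow)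
  have PP: "vge j P" using vge_self[of P] vP by simp
  have iP: "vge (-j) (inverse P)" using vge_inv[OF P0] vP by simp
  have ic: "vge (- v c) (inverse c)" using vge_inv[OF c] .
  have vc: "vge (v c) c" by (rule vge_self)
  have inM: "(P, 0) \<in> M" "(0, P) \<in> M" using M PP unfolding latb_def by auto
  have inL: "(P, 0) \<in> L" "(0, P) \<in> L" using L PP unfolding latb_def by auto
  have d1: "vge (v c - 2*j) a \<and> vge (v c - 2*j) c'"
  proof -
    have "m2app h (P, 0) \<in> scal2 c ` L" using eq inM(1) by blast
    then obtain x y where xy: "(x, y) \<in> L" "(a * P, c' * P) = (c * x, c * y)"
      unfolding hd scal2_def by auto
    have xb: "vge (-j) x" "vge (-j) y" using L xy(1) unfolding latb_def by auto
    have "a = c * x * inverse P" "c' = c * y * inverse P" using xy(2) P0 by (auto simp: field_simps)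
    then show ?thesis using vge_mult[OF vge_mult[OF vc xb(1)] iP] vge_mult[OF vge_mult[OF vc xb(2)] iP]
      by (simp add: algebra_simps)
  qed
  have d2: "vge (v c - 2*j) b \<and> vge (v c - 2*j) d"
  proof -
    have "m2app h (0, P) \<in> scal2 c ` L" using eq inM(2) by blast
    then obtain x y where xy: "(x, y) \<in> L" "(b * P, d * P) = (c * x, c * y)"
      unfolding hd scal2_def by auto
    have xb: "vge (-j) x" "vge (-j) y" using L xy(1) unfolding latb_def by auto
    have "b = c * x * inverse P" "d = c * y * inverse P" using xy(2) P0 by (auto simp: field_simps)
    then show ?thesis using vge_mult[OF vge_mult[OF vc xb(1)] iP] vge_mult[OF vge_mult[OF vc xb(2)] iP]
      by (simp add: algebra_simps)
  qed
  have d3: "vge (- v c - 2*j) d \<and> vge (- v c - 2*j) c'"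
  proof -
    have "scal2 c (P, 0) \<in> m2app h ` M" using eq inL(1) by blast
    then obtain u where u: "u \<in> M" "m2app h u = (c * P, 0)" by (auto simp: scal2_def)
    have "u = m2app (adj2 h) (c * P, 0)" using app_adj[OF h, of u] u(2) by simp
    then have u': "u = (d * (c * P), - (c' * (c * P)))" unfolding hd by simp
    have xb: "vge (-j) (d * (c * P))" "vge (-j) (c' * (c * P))" using M u(1) u' unfolding latb_def by auto
    have e: "(d * (c * P)) * inverse c * inverse P = d" "(c' * (c * P)) * inverse c * inverse P = c'"
      using P0 c by (auto simp: field_simps)
    have n: "-j + - v c + -j = - v c - 2*j" by simp
    show ?thesis using vge_mult[OF vge_mult[OF xb(1) ic] iP] vge_mult[OF vge_mult[OF xb(2) ic] iP]
      unfolding e n by simp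
  qed
  have d4: "vge (- v c - 2*j) b \<and> vge (- v c - 2*j) a"
  proof -
    have "scal2 c (0, P) \<in> m2app h ` M" using eq inL(2) by blast
    then obtain u where u: "u \<in> M" "m2app h u = (0, c * P)" by (auto simp: scal2_def)
    have "u = m2app (adj2 h) (0, c * P)" using app_adj[OF h, of u] u(2) by simp
    then have u': "u = (- (b * (c * P)), a * (c * P))" unfolding hd by simp
    have xb: "vge (-j) (b * (c * P))" "vge (-j) (a * (c * P))" using M u(1) u' unfolding latb_def by auto
    have e: "(b * (c * P)) * inverse c * inverse P = b" "(a * (c * P)) * inverse c * inverse P = a"
      using P0 c by (auto simp: field_simps)
    have n: "-j + - v c + -j = - v c - 2*j" by simp
    show ?thesis using vge_mult[OF vge_mult[OF xb(1) ic] iP] vge_mult[OF vge_mult[OF xb(2) ic] iP]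
      unfolding e n by simp
  qed
  show ?thesis unfolding hd using d1 d2 d3 d4 vge_comb[of "v c" j] by simp
qed

end


locale mainctx = dval v + rhoctx \<Gamma> \<rho> \<Upsilon>
  for v :: "'k::field \<Rightarrow> int" and \<Gamma> :: "('g, 'b) monoid_scheme" and \<rho> :: "'g \<Rightarrow> 'k mat2 set" and \<Upsilon>
begin

lemma vertex_lattice:
  assumes "X \<in> BT_vertices v"
  obtains M where "is_lattice v M" "X = lattice_equiv v `` {M}" "M \<in> X"
proof -
  obtain M where M: "M \<in> {M. is_lattice v M}" "X = lattice_equiv v `` {M}"
    using assms unfolding BT_vertices_def by (rule quotientE)
  have s1: "scal2 (1::'k) = id" by (rule ext) (simp add: scal2_1)
  have "\<exists>c::'k. c \<noteq> 0 \<and> M = scal2 c ` M" by (rule exI[of _ 1]) (simp add: s1)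
  then have "(M, M) \<in> lattice_equiv v" using M(1) unfolding lattice_equiv_def by simp
  then have "M \<in> X" using M(2) by simp
  then show ?thesis using that M by simp
qed

lemma two_vertices:
  assumes "BT_fixed_points v (\<rho> ` \<Upsilon>) \<noteq> {}"
  shows "\<exists>X Y. X \<in> BT_vertices v \<and> Y \<in> BT_vertices v \<and> (\<forall>A\<in>\<rho> ` \<Upsilon>. PSL2_act_vertex A X \<in> {X, Y})"
proof -
  obtain p where p: "p \<in> BT_points v" "\<forall>A\<in>\<rho> ` \<Upsilon>. BT_fixes v A p"
    using assms unfolding BT_fixed_points_def by blast
  show ?thesis
  proof (cases "\<exists>X\<in>BT_vertices v. p = (\<lambda>Z. if Z = X then 1 else 0)")
    case True
    then obtain X where X: "X \<in> BT_vertices v" "p = (\<lambda>Z. if Z = X then 1 else 0)" by blast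
    have "PSL2_act_vertex A X = X" if "A \<in> \<rho> ` \<Upsilon>" for A
    proof -
      have eq: "p (PSL2_act_vertex A X) = p X" using p(2) that X(1) unfolding BT_fixes_def by blast
      show ?thesis
      proof (rule ccontr)
        assume "PSL2_act_vertex A X \<noteq> X"
        then have "p (PSL2_act_vertex A X) = 0" "p X = 1" using X(2) by simp_all
        then show False using eq by simp
      qed
    qed
    then show ?thesis using X(1) by blast
  next
    case False
    then obtain X Y t where e: "BT_edge v X Y" "X \<noteq> Y" "0 < t" "t < 1"
      "p = (\<lambda>Z. if Z = X then t else if Z = Y then 1 - t else 0)"
      using p(1) unfolding BT_points_def by blast
    have XY: "X \<in> BT_vertices v" "Y \<in> BT_vertices v" using e(1) unfolding BT_edge_def by auto
    have "PSL2_act_vertex A X \<in> {X, Y}" if "A \<in> \<rho> ` \<Upsilon>" for A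
    proof -
      have eq: "p (PSL2_act_vertex A X) = p X" using p(2) that XY(1) unfolding BT_fixes_def by blast
      show ?thesis
      proof (rule ccontr)
        assume "PSL2_act_vertex A X \<notin> {X, Y}"
        then have "p (PSL2_act_vertex A X) = 0" "p X = t" using e(5) by simp_all
        then show False using eq e(3) by simp
      qed
    qed
    then show ?thesis using XY by blast
  qed
qed

lemma NN_bound:
  assumes "BT_fixed_points v (\<rho> ` \<Upsilon>) \<noteq> {}"
  shows "\<exists>j. \<forall>n\<in>NN. entb j n"
proof -
  obtain X Y where XY: "X \<in> BT_vertices v" "Y \<in> BT_vertices v" "\<forall>A\<in>\<rho> ` \<Upsilon>. PSL2_act_vertex A X \<in> {X, Y}"
    using two_vertices[OF assms] by blast
  obtain M0 where M0: "is_lattice v M0" "X = lattice_equiv v `` {M0}" "M0 \<in> X" using vertex_lattice[OF XY(1)] by blast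
  obtain L0 where L0: "is_lattice v L0" "Y = lattice_equiv v `` {L0}" "L0 \<in> Y" using vertex_lattice[OF XY(2)] by blast
  obtain j1 where j1: "j1 \<ge> 0" "latb j1 M0" using lat_bounds[OF M0(1)] by blast
  obtain j2 where j2: "j2 \<ge> 0" "latb j2 L0" using lat_bounds[OF L0(1)] by blast
  define j where "j = max j1 j2"
  have j: "0 \<le> j" "latb j M0" "latb j L0" using j1 j2 latb_mono unfolding j_def by auto
  have "entb (2*j) n" if nN: "n \<in> NN" for n
  proof -
    obtain u where u: "u \<in> \<Upsilon>" "n \<in> \<rho> u" using nN unfolding NN_def by blast
    have nS: "m2det n = 1" using nN NN_GG GG_SL2 SL2_iff by blast
    have a1: "m2app n ` M0 \<in> PSL2_act_vertex (\<rho> u) X"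
      unfolding PSL2_act_vertex_def using u(2) M0(3) by (intro CollectI exI[of _ n] exI[of _ M0]) simp
    have a2: "PSL2_act_vertex (\<rho> u) X \<in> {X, Y}" using XY(3) u(1) by blast
    have "m2app n ` M0 \<in> X \<or> m2app n ` M0 \<in> Y" using a1 a2 by auto
    then obtain L' where L': "L' = M0 \<or> L' = L0" "m2app n ` M0 \<in> lattice_equiv v `` {L'}"
      using M0(2) L0(2) by metis
    then have "(L', m2app n ` M0) \<in> lattice_equiv v" by simp
    then have "\<exists>c. c \<noteq> 0 \<and> m2app n ` M0 = scal2 c ` L'" unfolding lattice_equiv_def by simp
    then obtain c where c: "c \<noteq> 0" "m2app n ` M0 = scal2 c ` L'" by blast
    have "latb j L'" using L'(1) j by blast
    then show ?thesis using bound_h[OF j(2) _ j(1) nS c(1) c(2)] by blast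
  qed
  then show ?thesis by blast
qed

end


context dval begin

lemma vc_iff: "val_close v n y x \<longleftrightarrow> vge n (y - x)"
  unfolding val_close_def vge_def by auto

lemma istop_val: "istopology (\<lambda>U. \<forall>x\<in>U. \<exists>n. {y. val_close v n y x} \<subseteq> U)"
  unfolding istopology_def
proof (intro conjI)
  show "\<forall>S T. (\<forall>x\<in>S. \<exists>n. {y. val_close v n y x} \<subseteq> S) \<longrightarrow> (\<forall>x\<in>T. \<exists>n. {y. val_close v n y x} \<subseteq> T) \<longrightarrow>
      (\<forall>x\<in>S \<inter> T. \<exists>n. {y. val_close v n y x} \<subseteq> S \<inter> T)"
  proof (intro allI impI ballI)
    fix S T :: "'k set" and x
    assume S: "\<forall>x\<in>S. \<exists>n. {y. val_close v n y x} \<subseteq> S" and T: "\<forall>x\<in>T. \<exists>n. {y. val_close v n y x} \<subseteq> T"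
      and x: "x \<in> S \<inter> T"
    obtain n1 where n1: "{y. val_close v n1 y x} \<subseteq> S" using S x by blast
    obtain n2 where n2: "{y. val_close v n2 y x} \<subseteq> T" using T x by blast
    have "{y. val_close v (max n1 n2) y x} \<subseteq> {y. val_close v n1 y x}" unfolding val_close_def by auto
    moreover have "{y. val_close v (max n1 n2) y x} \<subseteq> {y. val_close v n2 y x}" unfolding val_close_def by auto
    ultimately have "{y. val_close v (max n1 n2) y x} \<subseteq> S \<inter> T" using n1 n2 by blast
    then show "\<exists>n. {y. val_close v n y x} \<subseteq> S \<inter> T" by (rule exI)
  qed
next
  show "\<forall>K. (\<forall>U\<in>K. \<forall>x\<in>U. \<exists>n. {y. val_close v n y x} \<subseteq> U) \<longrightarrow> (\<forall>x\<in>\<Union>K. \<exists>n. {y. val_close v n y x} \<subseteq> \<Union>K)"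
  proof (intro allI impI ballI)
    fix K :: "'k set set" and x
    assume K: "\<forall>U\<in>K. \<forall>x\<in>U. \<exists>n. {y. val_close v n y x} \<subseteq> U" and x: "x \<in> \<Union>K"
    obtain U where U: "U \<in> K" "x \<in> U" using x by blast
    obtain n where "{y. val_close v n y x} \<subseteq> U" using K U by blast
    then have "{y. val_close v n y x} \<subseteq> \<Union>K" using U(1) by blast
    then show "\<exists>n. {y. val_close v n y x} \<subseteq> \<Union>K" by (rule exI)
  qed
qed

lemma openin_val: "openin (val_topology v) U \<longleftrightarrow> (\<forall>x\<in>U. \<exists>n. {y. vge n (y - x)} \<subseteq> U)"
  unfolding val_topology_def using istop_val by (simp add: vc_iff)

lemma topspace_val[simp]: "topspace (val_topology v) = UNIV"
proof -
  have "openin (val_topology v) UNIV" unfolding openin_val by blast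
  then show ?thesis using openin_subset by blast
qed

definition dd :: "'k \<Rightarrow> 'k \<Rightarrow> real" where
  "dd x y = (if x = y then 0 else 2 powr (- real_of_int (v (x - y))))"

lemma v_sym: "v (x - y) = v (y - x)"
proof (cases "x = y")
  case False
  have "y - x = - (x - y)" by simp
  then show ?thesis using vneg[of "x - y"] False by simp
qed simp

lemma dd_sym: "dd x y = dd y x"
  unfolding dd_def using v_sym by auto

lemma dd_tri: "dd x z \<le> dd x y + dd y z"
proof (cases "x = z \<or> x = y \<or> y = z")
  case True
  then show ?thesis unfolding dd_def by auto
next
  case False
  then have n: "x - y \<noteq> 0" "y - z \<noteq> 0" "(x - y) + (y - z) \<noteq> 0" by auto
  have m: "min (v (x - y)) (v (y - z)) \<le> v (x - z)" using vadd[OF n] by simp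
  have p1: "0 \<le> dd x y" "0 \<le> dd y z" unfolding dd_def by auto
  show ?thesis
  proof (cases "v (x - y) \<le> v (y - z)")
    case True
    then have "dd x z \<le> dd x y" using m False unfolding dd_def by auto
    then show ?thesis using p1 by linarith
  next
    case False
    then have "dd x z \<le> dd y z" using m \<open>\<not> (x = z \<or> x = y \<or> y = z)\<close> unfolding dd_def by auto
    then show ?thesis using p1 by linarith
  qed
qed

lemma dd_metric: "Metric_space UNIV dd"
proof
  show "0 \<le> dd x y" for x y unfolding dd_def by simp
  show "dd x y = dd y x" for x y by (rule dd_sym)
  show "dd x y = 0 \<longleftrightarrow> x = y" for x y unfolding dd_def by simp
  show "dd x z \<le> dd x y + dd y z" for x y z by (rule dd_tri)
qed

lemma dd_small: "dd x y < 2 powr (- real_of_int n) \<Longrightarrow> vge n (y - x)"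
  unfolding dd_def vge_def using v_sym[of x y] by (auto split: if_splits)

lemma dd_le: "vge n (y - x) \<Longrightarrow> dd x y \<le> 2 powr (- real_of_int n)"
  unfolding dd_def vge_def using v_sym[of x y] by auto

lemma ex_small: "0 < (r::real) \<Longrightarrow> \<exists>n::int. 2 powr (- real_of_int n) < r"
proof -
  assume r: "0 < r"
  define n where "n = \<lceil>- log 2 r\<rceil> + 1"
  have "- real_of_int n < log 2 r" unfolding n_def by linarith
  then have "2 powr (- real_of_int n) < 2 powr (log 2 r)" by simp
  then show ?thesis using r by auto
qed

lemma mtop_eq: "Metric_space.mtopology UNIV dd = val_topology v"
proof -
  interpret M: Metric_space UNIV dd by (rule dd_metric)
  show ?thesis
  proof (rule topology_eq[THEN iffD2], intro allI)
    fix U :: "'k set"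
    show "openin M.mtopology U \<longleftrightarrow> openin (val_topology v) U"
      unfolding M.openin_mtopology openin_val
    proof (intro iffI ballI)
      fix x assume A: "U \<subseteq> UNIV \<and> (\<forall>x. x \<in> U \<longrightarrow> (\<exists>r>0. M.mball x r \<subseteq> U))" and x: "x \<in> U"
      then obtain r where r: "r > 0" "M.mball x r \<subseteq> U" by blast
      obtain n where n: "2 powr (- real_of_int n) < r" using ex_small[OF r(1)] by blast
      have "{y. vge n (y - x)} \<subseteq> U"
      proof
        fix y assume "y \<in> {y. vge n (y - x)}"
        then have "dd x y < r" using dd_le[of n y x] n by simp
        then show "y \<in> U" using r(2) by auto
      qed
      then show "\<exists>n. {y. vge n (y - x)} \<subseteq> U" by blast
    next
      assume A: "\<forall>x\<in>U. \<exists>n. {y. vge n (y - x)} \<subseteq> U"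
      show "U \<subseteq> UNIV \<and> (\<forall>x. x \<in> U \<longrightarrow> (\<exists>r>0. M.mball x r \<subseteq> U))"
      proof (intro conjI allI impI)
        fix x assume "x \<in> U"
        then obtain n where n: "{y. vge n (y - x)} \<subseteq> U" using A by blast
        have "M.mball x (2 powr (- real_of_int n)) \<subseteq> U"
          using n dd_small by auto
        then show "\<exists>r>0. M.mball x r \<subseteq> U" by (intro exI[of _ "2 powr (- real_of_int n)"]) simp
      qed simp
    qed
  qed
qed

end


context dval begin

lemma val_ideal_vge: "x \<in> val_ideal v \<longleftrightarrow> vge 1 x"
  unfolding val_ideal_def vge_def by simp

lemma res_reps:
  assumes "finite_residue_field v"
  shows "\<exists>R. finite R \<and> (\<forall>r\<in>R. vge 0 r) \<and> (\<forall>x. vge 0 x \<longrightarrow> (\<exists>r\<in>R. vge 1 (x - r)))"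
proof -
  define rel where "rel = {(x, y). x \<in> val_ring v \<and> y \<in> val_ring v \<and> x - y \<in> val_ideal v}"
  define Q where "Q = val_ring v // rel"
  have rel_iff: "(a, b) \<in> rel \<longleftrightarrow> vge 0 a \<and> vge 0 b \<and> vge 1 (a - b)" for a b
    unfolding rel_def by (simp add: val_ring_vge val_ideal_vge)
  have fin: "finite Q" using assms unfolding finite_residue_field_def Q_def rel_def .
  define ch where "ch = (\<lambda>C::'k set. SOME y. y \<in> C)"
  define R where "R = ch ` Q"
  have key: "ch (rel `` {x}) \<in> rel `` {x}" if "vge 0 x" for x
  proof -
    have "(x, x) \<in> rel" using that rel_iff by simp
    then have "x \<in> rel `` {x}" by simp
    then show ?thesis unfolding ch_def by (rule someI)
  qed
  have "vge 0 r" if rR: "r \<in> R" for r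
  proof -
    obtain C where C: "C \<in> Q" "r = ch C" using rR R_def by blast
    obtain x where x: "x \<in> val_ring v" "C = rel `` {x}" using C(1) unfolding Q_def by (rule quotientE)
    have "r \<in> rel `` {x}" using key[of x] x C(2) val_ring_vge by simp
    then have "(x, r) \<in> rel" by (simp only: Image_singleton_iff)
    then show ?thesis using rel_iff by blast
  qed
  moreover have "\<exists>r\<in>R. vge 1 (x - r)" if "vge 0 x" for x
  proof -
    have C: "rel `` {x} \<in> Q" unfolding Q_def using that by (simp add: quotientI val_ring_vge)
    have "ch (rel `` {x}) \<in> rel `` {x}" using key[OF that] .
    then have "(x, ch (rel `` {x})) \<in> rel" by (simp only: Image_singleton_iff)
    then have "vge 1 (x - ch (rel `` {x}))" using rel_iff by blast
    then show ?thesis using C R_def by blast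
  qed
  ultimately show ?thesis using fin R_def by blast
qed

lemma nets:
  assumes "finite_residue_field v"
  shows "\<exists>R. finite R \<and> (\<forall>r\<in>R. vge 0 r) \<and> (\<forall>x. vge 0 x \<longrightarrow> (\<exists>r\<in>R. vge (int m) (x - r)))"
proof (induction m)
  case 0
  have "\<forall>x. vge 0 x \<longrightarrow> (\<exists>r\<in>{0}. vge (int 0) (x - r))" by simp
  then show ?case by (intro exI[of _ "{0}"]) simp
next
  case (Suc m)
  obtain R1 where R1: "finite R1" "\<forall>r\<in>R1. vge 0 r" "\<forall>x. vge 0 x \<longrightarrow> (\<exists>r\<in>R1. vge 1 (x - r))"
    using res_reps[OF assms] by blast
  obtain Rm where Rm: "finite Rm" "\<forall>r\<in>Rm. vge 0 r" "\<forall>x. vge 0 x \<longrightarrow> (\<exists>r\<in>Rm. vge (int m) (x - r))"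
    using Suc by blast
  define R where "R = (\<lambda>p. fst p + unif * snd p) ` (R1 \<times> Rm)"
  have u1: "vge 1 unif" using vge_self[of unif] unif by simp
  have u0: "vge 0 unif" using vge_mono[OF _ u1] by simp
  have iu: "vge (-1) (inverse unif)" using vge_inv[OF unif(1)] unif by simp
  have "finite R" unfolding R_def using R1(1) Rm(1) by simp
  moreover have "\<forall>r\<in>R. vge 0 r"
    unfolding R_def using R1(2) Rm(2) vge_add vge_mult[OF u0] by fastforce
  moreover have "\<exists>r\<in>R. vge (int (Suc m)) (x - r)" if x: "vge 0 x" for x
  proof -
    obtain r where r: "r \<in> R1" "vge 1 (x - r)" using R1(3) x by blast
    define y where "y = (x - r) * inverse unif"
    have "vge (1 + -1) y" unfolding y_def using vge_mult[OF r(2) iu] .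
    then have y0: "vge 0 y" by simp
    obtain s where s: "s \<in> Rm" "vge (int m) (y - s)" using Rm(3) y0 by blast
    have e: "x - (r + unif * s) = unif * (y - s)" unfolding y_def using unif(1) by (simp add: field_simps)
    have "vge (1 + int m) (unif * (y - s))" using vge_mult[OF u1 s(2)] .
    then have "vge (int (Suc m)) (x - (r + unif * s))" unfolding e by simp
    moreover have "r + unif * s \<in> R" unfolding R_def using r(1) s(1) by force
    ultimately show ?thesis by blast
  qed
  ultimately show ?case by blast
qed

lemma net_B:
  assumes "finite_residue_field v" "0 \<le> k"
  shows "\<exists>R. finite R \<and> R \<subseteq> {x. vge (-k) x} \<and> (\<forall>x. vge (-k) x \<longrightarrow> (\<exists>r\<in>R. vge (int m) (x - r)))"
proof -
  define P where "P = unif ^ nat k"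
  have P0: "P \<noteq> 0" unfolding P_def using unif by simp
  have vP: "v P = k" unfolding P_def using unif assms(2) by (simp add: vpow)
  have PP: "vge k P" using vge_self[of P] vP by simp
  have iP: "vge (-k) (inverse P)" using vge_inv[OF P0] vP by simp
  obtain R0 where R0: "finite R0" "\<forall>r\<in>R0. vge 0 r" "\<forall>x. vge 0 x \<longrightarrow> (\<exists>r\<in>R0. vge (int (m + nat k)) (x - r))"
    using nets[OF assms(1)] by blast
  define R where "R = (\<lambda>r. r * inverse P) ` R0"
  have "finite R" unfolding R_def using R0(1) by simp
  moreover have "R \<subseteq> {x. vge (-k) x}" unfolding R_def using R0(2) vge_mult[OF _ iP] by fastforce
  moreover have "\<exists>r\<in>R. vge (int m) (x - r)" if x: "vge (-k) x" for x
  proof -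
    have "vge (-k + k) (x * P)" using vge_mult[OF x PP] .
    then obtain r where r: "r \<in> R0" "vge (int (m + nat k)) (x * P - r)" using R0(3) by auto
    have e: "x - r * inverse P = (x * P - r) * inverse P" using P0 by (simp add: field_simps)
    have "vge (int (m + nat k) + -k) ((x * P - r) * inverse P)" using vge_mult[OF r(2) iP] .
    then have "vge (int m) (x - r * inverse P)" unfolding e using assms(2) by simp
    then show ?thesis unfolding R_def using r(1) by blast
  qed
  ultimately show ?thesis by blast
qed

lemma closed_B: "closedin (val_topology v) {x. vge (-k) x}"
  unfolding closedin_def topspace_val openin_val
proof (intro conjI ballI)
  fix x assume x: "x \<in> UNIV - {x. vge (-k) x}"
  have "{y. vge (-k) (y - x)} \<subseteq> UNIV - {x. vge (-k) x}"
  proof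
    fix y assume y: "y \<in> {y. vge (- k) (y - x)}"
    have "y \<notin> {x. vge (-k) x}"
    proof
      assume "y \<in> {x. vge (-k) x}"
      then have "vge (-k) (y - (y - x))" using y vge_diff[of "-k" y "y - x"] by simp
      then show False using x by simp
    qed
    then show "y \<in> UNIV - {x. vge (-k) x}" by simp
  qed
  then show "\<exists>n. {y. vge n (y - x)} \<subseteq> UNIV - {x. vge (-k) x}" by blast
qed simp

lemma compact_B:
  assumes "local_field_val v" "0 \<le> k"
  shows "compactin (val_topology v) {x. vge (-k) x}"
proof -
  interpret M: Metric_space UNIV dd by (rule dd_metric)
  have comp: "val_complete v" and fr: "finite_residue_field v" using assms(1) unfolding local_field_val_def by auto
  have mc: "M.mcomplete"
    unfolding M.mcomplete_def
  proof (intro allI impI)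
    fix \<sigma> :: "nat \<Rightarrow> 'k" assume C: "M.MCauchy \<sigma>"
    have "\<forall>n. \<exists>N. \<forall>i\<ge>N. \<forall>j\<ge>N. val_close v n (\<sigma> i) (\<sigma> j)"
    proof
      fix n :: int
      have "(0::real) < 2 powr (- real_of_int n)" by simp
      then obtain N where N: "\<forall>i j. N \<le> i \<longrightarrow> N \<le> j \<longrightarrow> dd (\<sigma> i) (\<sigma> j) < 2 powr (- real_of_int n)"
        using C unfolding M.MCauchy_def by blast
      have "val_close v n (\<sigma> i) (\<sigma> j)" if "N \<le> i" "N \<le> j" for i j
        using N that dd_small[of "\<sigma> j" "\<sigma> i" n] dd_sym vc_iff by metis
      then show "\<exists>N. \<forall>i\<ge>N. \<forall>j\<ge>N. val_close v n (\<sigma> i) (\<sigma> j)" by blast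
    qed
    then obtain L where L: "\<forall>n. \<exists>N. \<forall>i\<ge>N. val_close v n (\<sigma> i) L"
      using comp unfolding val_complete_def by blast
    have "limitin M.mtopology \<sigma> L sequentially"
      unfolding M.limitin_metric
    proof (intro conjI allI impI)
      fix \<epsilon> :: real assume e: "0 < \<epsilon>"
      obtain n where n: "2 powr (- real_of_int n) < \<epsilon>" using ex_small[OF e] by blast
      obtain N where N: "\<forall>i\<ge>N. val_close v n (\<sigma> i) L" using L by blast
      have "dd (\<sigma> i) L < \<epsilon>" if "N \<le> i" for i
      proof -
        have "vge n (\<sigma> i - L)" using N that vc_iff by blast
        then have "dd L (\<sigma> i) \<le> 2 powr (- real_of_int n)" by (rule dd_le)
        then show ?thesis using n dd_sym by (metis le_less_trans)
      qed
      then show "\<forall>\<^sub>F x in sequentially. \<sigma> x \<in> UNIV \<and> dd (\<sigma> x) L < \<epsilon>"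
        unfolding eventually_sequentially by blast
    qed simp
    then show "\<exists>x. limitin M.mtopology \<sigma> x sequentially" by blast
  qed
  have tb: "M.mtotally_bounded {x. vge (-k) x}"
    unfolding M.mtotally_bounded_def
  proof (intro allI impI)
    fix \<epsilon> :: real assume e: "0 < \<epsilon>"
    obtain n where n: "2 powr (- real_of_int n) < \<epsilon>" using ex_small[OF e] by blast
    obtain R where R: "finite R" "R \<subseteq> {x. vge (-k) x}" "\<forall>x. vge (-k) x \<longrightarrow> (\<exists>r\<in>R. vge (int (nat n)) (x - r))"
      using net_B[OF fr assms(2)] by blast
    have "{x. vge (-k) x} \<subseteq> (\<Union>r\<in>R. M.mball r \<epsilon>)"
    proof
      fix x assume "x \<in> {x. vge (-k) x}"
      then obtain r where r: "r \<in> R" "vge (int (nat n)) (x - r)" using R(3) by blast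
      have "vge n (x - r)" using vge_mono[OF _ r(2)] by simp
      then have "dd r x \<le> 2 powr (- real_of_int n)" by (rule dd_le)
      then have "x \<in> M.mball r \<epsilon>" using n by simp
      then show "x \<in> (\<Union>r\<in>R. M.mball r \<epsilon>)" using r(1) by blast
    qed
    then show "\<exists>K. finite K \<and> K \<subseteq> {x. vge (-k) x} \<and> {x. vge (-k) x} \<subseteq> (\<Union>x\<in>K. M.mball x \<epsilon>)"
      using R(1,2) by blast
  qed
  have "compactin M.mtopology (M.mtopology closure_of {x. vge (-k) x})"
    using M.mtotally_bounded_eq_compact_closure_of[OF mc] tb by blast
  moreover have "M.mtopology closure_of {x. vge (-k) x} = {x. vge (-k) x}"
    unfolding closure_of_eq mtop_eq by (rule closed_B)
  ultimately show ?thesis unfolding mtop_eq by simp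
qed

end


context dval begin

definition ballv :: "int \<Rightarrow> 'k \<Rightarrow> 'k set" where
  "ballv n x = {y. vge n (y - x)}"

lemma ballv_open: "openin (val_topology v) (ballv n x)"
  unfolding openin_val ballv_def
proof
  fix y assume y: "y \<in> {y. vge n (y - x)}"
  have "{z. vge n (z - y)} \<subseteq> {y. vge n (y - x)}"
  proof
    fix z assume "z \<in> {z. vge n (z - y)}"
    then have "vge n ((z - y) + (y - x))" using y vge_add[of n "z - y" "y - x"] by simp
    then show "z \<in> {y. vge n (y - x)}" by simp
  qed
  then show "\<exists>m. {z. vge m (z - y)} \<subseteq> {y. vge n (y - x)}" by blast
qed

abbreviation T4 where "T4 \<equiv> prod_topology (val_topology v) (prod_topology (val_topology v) (prod_topology (val_topology v) (val_topology v)))"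

definition box :: "int \<Rightarrow> 'k mat2 \<Rightarrow> 'k mat2 set" where
  "box n a = ballv n (fst a) \<times> (ballv n (fst (snd a)) \<times> (ballv n (fst (snd (snd a))) \<times> ballv n (snd (snd (snd a)))))"

lemma in_box: "(b1, b2, b3, b4) \<in> box n (a1, a2, a3, a4) \<longleftrightarrow>
   vge n (b1 - a1) \<and> vge n (b2 - a2) \<and> vge n (b3 - a3) \<and> vge n (b4 - a4)"
  unfolding box_def ballv_def by simp

lemma self_box: "a \<in> box n a"
  by (cases a) (simp add: in_box)

lemma box_open: "openin T4 (box n a)"
  unfolding box_def by (simp add: openin_prod_Times_iff ballv_open)

lemma topspace_T4[simp]: "topspace T4 = UNIV" by simp

lemma open_if_boxes:
  assumes "\<forall>a\<in>S. \<exists>n. box n a \<subseteq> S"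
  shows "openin T4 S"
proof -
  define N where "N a = (SOME n. box n a \<subseteq> S)" for a
  have N: "box (N a) a \<subseteq> S" if "a \<in> S" for a
    unfolding N_def using assms that by (metis (mono_tags, lifting) someI_ex)
  have "S = \<Union>((\<lambda>a. box (N a) a) ` S)"
  proof (intro Set.set_eqI iffI)
    fix x assume x: "x \<in> S"
    have "x \<in> box (N x) x" by (rule self_box)
    then show "x \<in> \<Union>((\<lambda>a. box (N a) a) ` S)" using x by blast
  next
    fix x assume "x \<in> \<Union>((\<lambda>a. box (N a) a) ` S)"
    then obtain a where "a \<in> S" "x \<in> box (N a) a" by blast
    then show "x \<in> S" using N by blast
  qed
  moreover have "openin T4 (\<Union>((\<lambda>a. box (N a) a) ` S))"
    by (rule openin_Union) (auto simp: box_open)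
  ultimately show ?thesis by simp
qed

lemma closed_if_boxes:
  assumes "\<forall>a. a \<notin> C \<longrightarrow> (\<exists>n. box n a \<inter> C = {})"
  shows "closedin T4 C"
proof -
  have "\<forall>a\<in>UNIV - C. \<exists>n. box n a \<subseteq> UNIV - C"
  proof
    fix a assume a: "a \<in> UNIV - C"
    obtain n where "box n a \<inter> C = {}" using assms a by blast
    then have "box n a \<subseteq> UNIV - C" by blast
    then show "\<exists>n. box n a \<subseteq> UNIV - C" by (rule exI)
  qed
  then have "openin T4 (UNIV - C)" by (rule open_if_boxes)
  then show ?thesis unfolding closedin_def by simp
qed

lemma compact_B4:
  assumes "local_field_val v" "0 \<le> k"
  shows "compactin T4 ({x. vge (-k) x} \<times> ({x. vge (-k) x} \<times> ({x. vge (-k) x} \<times> {x. vge (-k) x})))"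
proof -
  have c: "compactin (val_topology v) {x. vge (-k) x}" using compact_B[OF assms] .
  have c2: "compactin (prod_topology (val_topology v) (val_topology v)) ({x. vge (-k) x} \<times> {x. vge (-k) x})"
    using c compactin_Times by blast
  have c3: "compactin (prod_topology (val_topology v) (prod_topology (val_topology v) (val_topology v))) ({x. vge (-k) x} \<times> ({x. vge (-k) x} \<times> {x. vge (-k) x}))"
    using c c2 compactin_Times by blast
  show ?thesis using c c3 compactin_Times by blast
qed

end

context dval begin

lemma istop_PSL2:
  shows "istopology (\<lambda>W. W \<subseteq> carrier PSL2 \<and> openin (SL2_topology v) (\<Union>W))"
  unfolding istopology_def
proof (rule conjI; intro allI impI)
  fix S T :: "'k mat2 set set"
  assume S: "S \<subseteq> carrier PSL2 \<and> openin (SL2_topology v) (\<Union>S)" and T: "T \<subseteq> carrier PSL2 \<and> openin (SL2_topology v) (\<Union>T)"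
  have "\<Union>(S \<inter> T) = \<Union>S \<inter> \<Union>T"
  proof (intro Set.set_eqI iffI)
    fix x assume "x \<in> \<Union>S \<inter> \<Union>T"
    then obtain A B where AB: "A \<in> S" "B \<in> T" "x \<in> A" "x \<in> B" by blast
    obtain a b where "A = cls a" "B = cls b" using AB S T cls_SL2 by (metis subsetD)
    then have "A = B" using AB mem_cls by metis
    then show "x \<in> \<Union>(S \<inter> T)" using AB by blast
  qed blast
  then show "S \<inter> T \<subseteq> carrier PSL2 \<and> openin (SL2_topology v) (\<Union>(S \<inter> T))"
    using S T by auto
next
  fix K :: "'k mat2 set set set"
  assume K: "\<forall>W\<in>K. W \<subseteq> carrier PSL2 \<and> openin (SL2_topology v) (\<Union>W)"
  have "\<Union>(\<Union>K) = \<Union>((\<lambda>W. \<Union>W) ` K)" by blast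
  moreover have "openin (SL2_topology v) (\<Union>((\<lambda>W. \<Union>W) ` K))"
    using K by (intro openin_Union) auto
  ultimately show "\<Union>K \<subseteq> carrier PSL2 \<and> openin (SL2_topology v) (\<Union>(\<Union>K))" using K by auto
qed

lemma openin_PSL2:
  shows "openin (PSL2_topology v) W \<longleftrightarrow> W \<subseteq> carrier PSL2 \<and> openin (SL2_topology v) (\<Union>W)"
  unfolding PSL2_topology_def topology_inverse'[OF istop_PSL2] ..

lemma topspace_SL2[simp]:
  shows "topspace (SL2_topology v) = SL2"
  unfolding SL2_topology_def by simp

lemma topspace_PSL2:
  shows "topspace (PSL2_topology v) = carrier PSL2"
proof -
  have "\<Union>(carrier PSL2) = (SL2 :: 'k mat2 set)"
  proof (intro Set.set_eqI iffI)
    fix x :: "'k mat2" assume "x \<in> \<Union>(carrier PSL2)" then show "x \<in> SL2" using carrier_sub_SL2 by blast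
  next
    fix x :: "'k mat2" assume "x \<in> SL2" then show "x \<in> \<Union>(carrier PSL2)" unfolding PSL2_carrier using self_cls by blast
  qed
  then have "openin (PSL2_topology v) (carrier (PSL2 :: 'k mat2 set monoid))"
    unfolding openin_PSL2 using openin_topspace[of "SL2_topology v"] by simp
  then have "carrier PSL2 \<subseteq> topspace (PSL2_topology v)" by (rule openin_subset)
  moreover have "topspace (PSL2_topology v) \<subseteq> carrier PSL2"
    using openin_PSL2[of "topspace (PSL2_topology v)"] by simp
  ultimately show ?thesis by blast
qed

lemma cont_cls:
  shows "continuous_map (SL2_topology v) (PSL2_topology v) cls"
  unfolding continuous_map
proof (intro conjI allI impI)
  show "cls ` topspace (SL2_topology v) \<subseteq> topspace (PSL2_topology v)"
    unfolding topspace_PSL2 topspace_SL2 PSL2_carrier by blast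
next
  fix U assume "openin (PSL2_topology v) U"
  then have U: "U \<subseteq> carrier PSL2" "openin (SL2_topology v) (\<Union>U)" unfolding openin_PSL2 by auto
  have "{x \<in> topspace (SL2_topology v). cls x \<in> U} = \<Union>U"
  proof (intro Set.set_eqI iffI)
    fix x assume "x \<in> {x \<in> topspace (SL2_topology v). cls x \<in> U}"
    then show "x \<in> \<Union>U" using self_cls by blast
  next
    fix x assume "x \<in> \<Union>U"
    then obtain A where A: "A \<in> U" "x \<in> A" by blast
    obtain a where a: "A = cls a" using A U cls_SL2 by blast
    have "cls x = A" using A(2) a mem_cls by metis
    moreover have "x \<in> SL2" using A U carrier_sub_SL2 by blast
    ultimately show "x \<in> {x \<in> topspace (SL2_topology v). cls x \<in> U}" using A by simp
  qed
  then show "openin (SL2_topology v) {x \<in> topspace (SL2_topology v). cls x \<in> U}" using U by simp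
qed

end


inductive_set Lset :: "('k::field \<Rightarrow> int) \<Rightarrow> 'k mat2 set \<Rightarrow> ('k \<times> 'k) set" for v G where
  Lgen: "g \<in> G \<Longrightarrow> x \<in> val_ring v \<Longrightarrow> y \<in> val_ring v \<Longrightarrow> m2app g (x, y) \<in> Lset v G"
| Ladd: "u \<in> Lset v G \<Longrightarrow> w \<in> Lset v G \<Longrightarrow> (fst u + fst w, snd u + snd w) \<in> Lset v G"

lemma app_mult: "m2app (m2mult g h) u = m2app g (m2app h u)"
  by (cases g; cases h; cases u) (simp add: algebra_simps)

lemma app_add: "m2app g (fst u + fst w, snd u + snd w) = (fst (m2app g u) + fst (m2app g w), snd (m2app g u) + snd (m2app g w))"
  by (cases g; cases u; cases w) (simp add: algebra_simps)

lemma app_negv: "m2app g (- x, - y) = (- fst (m2app g (x, y)), - snd (m2app g (x, y)))"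
  by (cases g) (simp add: algebra_simps)

lemma app_id: "m2app m2id u = u"
  by (cases u) (simp add: m2id_def)

lemma adj_adj: "adj2 (adj2 a) = a" by (cases a) simp

lemma adj_mult: "adj2 (m2mult a b) = m2mult (adj2 b) (adj2 a)"
  by (cases a; cases b) (simp add: algebra_simps)

locale bgrp = dval v for v :: "'k::field \<Rightarrow> int" +
  fixes G :: "'k mat2 set" and K :: int
  assumes GS: "G \<subseteq> SL2" and Gid: "m2id \<in> G" and Gm: "g \<in> G \<Longrightarrow> h \<in> G \<Longrightarrow> m2mult g h \<in> G"
    and Gadj: "g \<in> G \<Longrightarrow> adj2 g \<in> G" and Gb: "g \<in> G \<Longrightarrow> entb K g" and K0: "0 \<le> K"
    and lf: "local_field_val v"
begin

lemma L_act: "u \<in> Lset v G \<Longrightarrow> g \<in> G \<Longrightarrow> m2app g u \<in> Lset v G"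
proof (induction u rule: Lset.induct)
  case (Lgen h x y)
  have "m2app g (m2app h (x, y)) = m2app (m2mult g h) (x, y)" by (simp add: app_mult)
  then show ?case using Lgen Gm Lset.Lgen by metis
next
  case (Ladd u w)
  then show ?case unfolding app_add using Lset.Ladd by metis
qed

lemma L_neg: "u \<in> Lset v G \<Longrightarrow> (- fst u, - snd u) \<in> Lset v G"
proof (induction u rule: Lset.induct)
  case (Lgen h x y)
  have "- x \<in> val_ring v" "- y \<in> val_ring v" using Lgen by (simp_all add: val_ring_vge)
  then have "m2app h (- x, - y) \<in> Lset v G" using Lgen Lset.Lgen by blast
  then show ?case unfolding app_negv by simp
next
  case (Ladd u w)
  have "(fst (- fst u, - snd u) + fst (- fst w, - snd w), snd (- fst u, - snd u) + snd (- fst w, - snd w)) \<in> Lset v G"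
    using Ladd Lset.Ladd by blast
  then show ?case by (simp add: algebra_simps)
qed

lemma L_O2:
  assumes "vge 0 x" "vge 0 y" shows "(x, y) \<in> Lset v G"
proof -
  have "x \<in> val_ring v" "y \<in> val_ring v" using assms by (simp_all add: val_ring_vge)
  then have "m2app m2id (x, y) \<in> Lset v G" by (rule Lset.Lgen[OF Gid])
  then show ?thesis by (simp add: app_id)
qed

lemma L_bnd: "u \<in> Lset v G \<Longrightarrow> vge (-K) (fst u) \<and> vge (-K) (snd u)"
proof (induction u rule: Lset.induct)
  case (Lgen h x y)
  obtain a b c d where h: "h = (a, b, c, d)" by (cases h) auto
  have e: "vge (-K) a" "vge (-K) b" "vge (-K) c" "vge (-K) d" using Gb[OF Lgen(1)] h by auto
  have xy: "vge 0 x" "vge 0 y" using Lgen by (simp_all add: val_ring_vge)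
  have m: "vge (-K) (p * q)" if "vge (-K) p" "vge 0 q" for p q using vge_mult[OF that] by simp
  show ?case unfolding h using e xy m by (simp add: vge_add)
next
  case (Ladd u w)
  then show ?case by (simp add: vge_add)
qed

lemma L_addO:
  assumes "u \<in> Lset v G" "vge 0 x" "vge 0 y"
  shows "(fst u + x, snd u + y) \<in> Lset v G"
proof -
  have "(x, y) \<in> Lset v G" using L_O2 assms(2,3) .
  from Lset.Ladd[OF assms(1) this] show ?thesis by simp
qed

definition Hp :: "'k mat2 set" where
  "Hp = {a. m2det a = 1 \<and> (\<forall>u\<in>Lset v G. m2app a u \<in> Lset v G \<and> m2app (adj2 a) u \<in> Lset v G)}"

lemma G_Hp: "G \<subseteq> Hp"
proof
  fix g assume g: "g \<in> G"
  have "m2det g = 1" using g GS SL2_iff by blast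
  then show "g \<in> Hp" unfolding Hp_def using g Gadj L_act by blast
qed

lemma Hp_SL2: "Hp \<subseteq> SL2"
proof
  fix a assume "a \<in> Hp"
  then show "a \<in> SL2" unfolding Hp_def by (simp add: SL2_iff)
qed

lemma Hp_id: "m2id \<in> Hp" using G_Hp Gid by blast

lemma Hp_mult: "a \<in> Hp \<Longrightarrow> b \<in> Hp \<Longrightarrow> m2mult a b \<in> Hp"
  unfolding Hp_def by (simp add: det_mult app_mult adj_mult)

lemma Hp_adj: "a \<in> Hp \<Longrightarrow> adj2 a \<in> Hp"
  unfolding Hp_def by (simp add: adj_adj)

definition BK where "BK = {x. vge (-K) x}"

lemma Hp_bnd: "Hp \<subseteq> BK \<times> (BK \<times> (BK \<times> BK))"
proof
  fix a assume a: "a \<in> Hp"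
  obtain a1 a2 a3 a4 where ad: "a = (a1, a2, a3, a4)" by (cases a) auto
  have "(1, 0) \<in> Lset v G" "(0, 1) \<in> Lset v G" using L_O2 vge_1 by auto
  then have "m2app a (1, 0) \<in> Lset v G" "m2app a (0, 1) \<in> Lset v G" using a unfolding Hp_def by auto
  then have "vge (-K) a1 \<and> vge (-K) a3" "vge (-K) a2 \<and> vge (-K) a4" using L_bnd unfolding ad by force+
  then show "a \<in> BK \<times> (BK \<times> (BK \<times> BK))" unfolding ad BK_def by simp
qed

lemma det_pert:
  assumes "entb k a" "0 \<le> k" "k \<le> n" "b \<in> box n a"
  shows "vge (n - k) (m2det b - m2det a)"
proof -
  obtain a1 a2 a3 a4 where ad: "a = (a1, a2, a3, a4)" by (cases a) auto
  obtain b1 b2 b3 b4 where bd: "b = (b1, b2, b3, b4)" by (cases b) auto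
  define e1 where "e1 = b1 - a1" define e2 where "e2 = b2 - a2"
  define e3 where "e3 = b3 - a3" define e4 where "e4 = b4 - a4"
  have E: "vge n e1" "vge n e2" "vge n e3" "vge n e4" using assms(4) unfolding ad bd e1_def e2_def e3_def e4_def in_box by auto
  have A: "vge (-k) a1" "vge (-k) a2" "vge (-k) a3" "vge (-k) a4" using assms(1) ad by auto
  have eq: "m2det b - m2det a = (e1 * a4 + a1 * e4 + e1 * e4) - (e2 * a3 + a2 * e3 + e2 * e3)"
    unfolding ad bd e1_def e2_def e3_def e4_def by (simp add: algebra_simps)
  have p1: "vge (n - k) (p * q)" if "vge n p" "vge (-k) q" for p q using vge_mult[OF that] by simp
  have p2: "vge (n - k) (q * p)" if "vge n p" "vge (-k) q" for p q using vge_mult[OF that(2,1)] by (simp add: add.commute)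
  have p3: "vge (n - k) (p * q)" if "vge n p" "vge n q" for p q
    using vge_mult[OF that] vge_mono[of "n - k" "n + n"] assms(2,3) by simp
  show ?thesis unfolding eq using E A p1 p2 p3 by (intro vge_diff vge_add) auto
qed

lemma app_pert:
  assumes u: "u \<in> Lset v G" and b: "b \<in> box K a" and bu: "m2app b u \<in> Lset v G"
  shows "m2app a u \<in> Lset v G"
proof -
  obtain a1 a2 a3 a4 where ad: "a = (a1, a2, a3, a4)" by (cases a) auto
  obtain b1 b2 b3 b4 where bd: "b = (b1, b2, b3, b4)" by (cases b) auto
  obtain u1 u2 where ud: "u = (u1, u2)" by (cases u) auto
  have U: "vge (-K) u1" "vge (-K) u2" using L_bnd[OF u] ud by auto
  have E: "vge K (a1 - b1)" "vge K (a2 - b2)" "vge K (a3 - b3)" "vge K (a4 - b4)"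
    using b unfolding ad bd in_box using vge_neg by (metis minus_diff_eq)+
  have m: "vge 0 (p * q)" if "vge K p" "vge (-K) q" for p q using vge_mult[OF that] by simp
  have x: "vge 0 ((a1 - b1) * u1 + (a2 - b2) * u2)" "vge 0 ((a3 - b3) * u1 + (a4 - b4) * u2)"
    using E U m vge_add by auto
  have "(fst (m2app b u) + ((a1 - b1) * u1 + (a2 - b2) * u2), snd (m2app b u) + ((a3 - b3) * u1 + (a4 - b4) * u2)) \<in> Lset v G"
    using L_addO[OF bu x] .
  moreover have "(fst (m2app b u) + ((a1 - b1) * u1 + (a2 - b2) * u2), snd (m2app b u) + ((a3 - b3) * u1 + (a4 - b4) * u2)) = m2app a u"
    unfolding ad bd ud by (simp add: algebra_simps)
  ultimately show ?thesis by simp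
qed

lemma adj_box: "b \<in> box n a \<Longrightarrow> adj2 b \<in> box n (adj2 a)"
proof -
  assume b: "b \<in> box n a"
  obtain a1 a2 a3 a4 where ad: "a = (a1, a2, a3, a4)" by (cases a) auto
  obtain b1 b2 b3 b4 where bd: "b = (b1, b2, b3, b4)" by (cases b) auto
  have "vge n (- b2 - - a2)" "vge n (- b3 - - a3)" using b unfolding ad bd in_box
    by (metis minus_diff_eq minus_diff_minus vge_neg)+
  then show ?thesis using b unfolding ad bd by (simp add: in_box)
qed

lemma Hp_closed: "closedin T4 Hp"
proof (rule closed_if_boxes, intro allI impI)
  fix a assume a: "a \<notin> Hp"
  show "\<exists>n. box n a \<inter> Hp = {}"
  proof (cases "m2det a = 1")
    case False
    obtain k' where k': "entb k' a" using entb_ex by blast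
    define k where "k = max k' 0"
    have k: "entb k a" "0 \<le> k" using entb_mono[OF _ k'] k_def by auto
    define N where "N = v (m2det a - 1) + 1"
    have nN: "\<not> vge N (m2det a - 1)" unfolding N_def using not_vge False by simp
    define n where "n = max 0 N + k"
    have "b \<notin> Hp" if b: "b \<in> box n a" for b
    proof
      assume "b \<in> Hp"
      then have db: "m2det b = 1" unfolding Hp_def by simp
      have kn: "k \<le> n" unfolding n_def by simp
      have "vge (n - k) (m2det b - m2det a)" using det_pert[OF k(1) k(2) kn b] .
      moreover have "m2det a - 1 = - (m2det b - m2det a)" using db by simp
      ultimately have "vge (n - k) (- (m2det b - m2det a))" by (simp only: vge_neg)
      then have "vge (n - k) (m2det a - 1)" using \<open>m2det a - 1 = - (m2det b - m2det a)\<close> by simp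
      moreover have "N \<le> n - k" unfolding n_def by simp
      ultimately have "vge N (m2det a - 1)" using vge_mono by blast
      then show False using nN by simp
    qed
    then show ?thesis by blast
  next
    case True
    then obtain u where u: "u \<in> Lset v G" "m2app a u \<notin> Lset v G \<or> m2app (adj2 a) u \<notin> Lset v G"
      using a unfolding Hp_def by blast
    have "b \<notin> Hp" if b: "b \<in> box K a" for b
    proof
      assume bH: "b \<in> Hp"
      then have "m2app b u \<in> Lset v G" "m2app (adj2 b) u \<in> Lset v G" using u(1) unfolding Hp_def by auto
      then have "m2app a u \<in> Lset v G" "m2app (adj2 a) u \<in> Lset v G"
        using app_pert[OF u(1) b] app_pert[OF u(1) adj_box[OF b]] by auto
      then show False using u(2) by blast
    qed
    then show ?thesis by blast
  qed
qed

lemma Hp_compact: "compactin (SL2_topology v) Hp"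
proof -
  have "compactin T4 (BK \<times> (BK \<times> (BK \<times> BK)))" unfolding BK_def using compact_B4[OF lf K0] .
  then have "compactin T4 Hp" using closed_compactin[OF _ Hp_bnd Hp_closed] by blast
  then show ?thesis unfolding SL2_topology_def compactin_subtopology using Hp_SL2 by blast
qed

definition HH where "HH = cls ` Hp"

lemma HH_compact: "compactin (PSL2_topology v) HH"
  unfolding HH_def using image_compactin[OF Hp_compact cont_cls] .

lemma HH_subgroup: "subgroup HH PSL2"
proof (rule subgroup.intro)
  show "HH \<subseteq> carrier PSL2" unfolding HH_def PSL2_carrier by (rule image_mono[OF Hp_SL2])
next
  fix x y assume x: "x \<in> HH" and y: "y \<in> HH"
  obtain a where a: "a \<in> Hp" "x = cls a" using x unfolding HH_def by (rule imageE) simp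
  obtain b where b: "b \<in> Hp" "y = cls b" using y unfolding HH_def by (rule imageE) simp
  have "m2mult a b \<in> Hp" using Hp_mult a(1) b(1) .
  then have "cls (m2mult a b) \<in> HH" unfolding HH_def by (rule imageI)
  then show "x \<otimes>\<^bsub>PSL2\<^esub> y \<in> HH" unfolding a(2) b(2) PSL2_mult .
next
  show "\<one>\<^bsub>PSL2\<^esub> \<in> HH" unfolding HH_def PSL2_one using Hp_id by (rule imageI)
next
  fix x assume x: "x \<in> HH"
  obtain a where a: "a \<in> Hp" "x = cls a" using x unfolding HH_def by (rule imageE) simp
  have "a \<in> SL2" using a(1) Hp_SL2 by blast
  then have "inv\<^bsub>PSL2\<^esub> x = cls (adj2 a)" using PSL2_inv a(2) by simp
  moreover have "cls (adj2 a) \<in> HH" unfolding HH_def using Hp_adj[OF a(1)] by (rule imageI)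
  ultimately show "inv\<^bsub>PSL2\<^esub> x \<in> HH" by simp
qed

end


theorem lemma4p14:
  fixes v :: "'k::field \<Rightarrow> int"
    and \<Gamma> :: "('g, 'b) monoid_scheme"
    and \<rho> :: "'g \<Rightarrow> 'k mat2 set"
    and \<Upsilon> :: "'g set"
  assumes "local_field_val v"
    and "group \<Gamma>"
    and "\<rho> \<in> hom \<Gamma> PSL2"
    and "normal \<Upsilon> \<Gamma>"
    and "BT_fixed_points v (\<rho> ` \<Upsilon>) \<noteq> {}"
    and "zariski_dense_PSL2 (\<rho> ` carrier \<Gamma>)"
    and "\<not> (\<exists>H. subgroup H PSL2 \<and> compactin (PSL2_topology v) H \<and> \<rho> ` carrier \<Gamma> \<subseteq> H)"
  shows "\<rho> ` \<Upsilon> = {\<one>\<^bsub>PSL2\<^esub>}"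
proof -
  have dv: "dval v" using assms(1) unfolding local_field_val_def dval_def by blast
  have rc: "rhoctx \<Gamma> \<rho> \<Upsilon>" using assms(2,3,4) unfolding rhoctx_def by blast
  interpret mainctx v \<Gamma> \<rho> \<Upsilon> unfolding mainctx_def using dv rc by blast
  obtain j where j: "\<forall>n\<in>NN. entb j n" using NN_bound[OF assms(5)] by blast
  have zd: "zariski_dense_SL2 GG" using assms(6) unfolding zariski_dense_PSL2_def GG_def .
  have all1: "\<rho> u = cls m2id" if u: "u \<in> \<Upsilon>" for u
  proof (rule ccontr)
    assume ne: "\<rho> u \<noteq> cls m2id"
    have uc: "u \<in> carrier \<Gamma>" using u Ups_sub by blast
    obtain n where n: "n \<in> SL2" "\<rho> u = cls n" using cls_SL2[OF rho_carrier[OF uc]] by blast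
    have nN: "n \<in> NN" unfolding NN_def using u n(2) self_cls by fastforce
    have n1: "n \<noteq> m2id" using ne n(2) by blast
    have n2: "n \<noteq> m2neg m2id" using ne n(2) cls_neg by metis
    have ndet: "m2det n = 1" using n(1) SL2_iff by blast
    obtain k where k: "\<forall>g\<in>GG. entb k g"
      using core_bound[OF GG_SL2 zd nN ndet n1 n2 _ j] NN_conj by blast
    define K where "K = max k 0"
    have kK: "\<forall>g\<in>GG. entb K g"
    proof
      fix g assume "g \<in> GG"
      then have "entb k g" using k by blast
      moreover have "k \<le> K" unfolding K_def by simp
      ultimately show "entb K g" using entb_mono by blast
    qed
    interpret B: bgrp v GG K
    proof (unfold_locales)
      show "GG \<subseteq> SL2" by (rule GG_SL2)
      show "m2id \<in> GG" by (rule GG_id)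
      show "m2mult g h \<in> GG" if "g \<in> GG" "h \<in> GG" for g h using GG_mult that by blast
      show "adj2 g \<in> GG" if "g \<in> GG" for g using GG_adj that by blast
      show "entb K g" if "g \<in> GG" for g using kK that by blast
      show "0 \<le> K" unfolding K_def by simp
      show "local_field_val v" by (rule assms(1))
    qed
    have "\<rho> ` carrier \<Gamma> \<subseteq> B.HH"
    proof
      fix y assume "y \<in> \<rho> ` carrier \<Gamma>"
      then obtain x where x: "x \<in> carrier \<Gamma>" "y = \<rho> x" by blast
      obtain a where a: "a \<in> SL2" "\<rho> x = cls a" using cls_SL2[OF rho_carrier[OF x(1)]] by blast
      have "a \<in> GG" unfolding GG_def using x(1) a(2) self_cls by fastforce
      then have "a \<in> B.Hp" using B.G_Hp by blast
      then show "y \<in> B.HH" unfolding B.HH_def x(2) a(2) by (rule imageI)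
    qed
    then show False using assms(7) B.HH_subgroup B.HH_compact by blast
  qed
  have one: "\<one>\<^bsub>\<Gamma>\<^esub> \<in> \<Upsilon>" using assms(4) unfolding normal_def subgroup_def by blast
  show ?thesis
  proof
    show "\<rho> ` \<Upsilon> \<subseteq> {\<one>\<^bsub>PSL2\<^esub>}" using all1 PSL2_one by auto
    show "{\<one>\<^bsub>PSL2\<^esub>} \<subseteq> \<rho> ` \<Upsilon>" using all1[OF one] one PSL2_one by force
  qed
qed


end
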